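(* A geodesic $\bar\gamma$ on the modular surface $\mathcal M=\mathrm{PSL}(2,\mathbb Z)\backslash\mathbb H$ is closed if and only if it has a lift $\gamma$ to $\mathbb H$ with $(\gamma_\infty,\gamma_{-\infty})\in\mathcal S$ whose endpoints are purely periodic of the form $$\gamma_\infty=\epsilon\,[\![\overline{(a_0,\epsilon_0)\cdots(a_{r-1},\epsilon_{r-1})}]\!],\qquad \gamma_{-\infty}=-\epsilon\,\langle\!\langle\overline{(\epsilon_{r-1}/a_{r-1})\cdots(\epsilon_0/a_0)}\rangle\!\rangle,$$ for some $\epsilon\in\{\pm1\}$, $r\ge1$ and digits $(a_i,\epsilon_i)\in\{(2,-1),(1,+1)\}$ with $(-\epsilon_0)(-\epsilon_1)\cdots(-\epsilon_{r-1})=1$.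
   Context: $\gamma_\infty,\gamma_{-\infty}$ denote the forward and backward endpoints of an oriented geodesic $\gamma$ in $\mathbb H$; $\mathcal S:=\big((1,2)\times(-\infty,1)\big)\cup\big((-2,-1)\times(-1,\infty)\big)$. For digits $(a_i,\epsilon_i)\in\{(2,-1),(1,+1)\}$, $[\![(a_0,\epsilon_0)(a_1,\epsilon_1)\cdots]\!]$ denotes the value of $a_0+\cfrac{\epsilon_0}{a_1+\cfrac{\epsilon_1}{a_2+\cdots}}$, and $\langle\!\langle(f_0/b_0)(f_1/b_1)\cdots\rangle\!\rangle$ denotes the value of $\cfrac{f_0}{b_0+\cfrac{f_1}{b_1+\cdots}}$, a Lehner digit $(a,\epsilon)$ being used as the digit $(\epsilon/a)$. An overline denotes infinite periodic repetition of the block. *)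

theory Defs
  imports "HOL-Analysis.Analysis"
begin

definition moeb :: "real \<times> real \<times> real \<times> real \<Rightarrow> complex \<Rightarrow> complex" where
  "moeb g z = (case g of (a,b,c,d) \<Rightarrow>
      (of_real a * z + of_real b) / (of_real c * z + of_real d))"

text \<open>The modular group, represented by SL(2,Z) (which acts on H as PSL(2,Z)).\<close>
definition SL2Z :: "(int \<times> int \<times> int \<times> int) set" where
  "SL2Z = {(a,b,c,d). a * d - b * c = 1}"

definition of_int_mat :: "int \<times> int \<times> int \<times> int \<Rightarrow> real \<times> real \<times> real \<times> real" where
  "of_int_mat g = (case g of (a,b,c,d) \<Rightarrow> (of_int a, of_int b, of_int c, of_int d))"

definition is_geodesic :: "(real \<Rightarrow> complex) \<Rightarrow> bool" where
  "is_geodesic \<gamma> \<longleftrightarrow> (\<exists>a b c d. a * d - b * c = 1 \<and>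
      (\<forall>t. \<gamma> t = moeb (a,b,c,d) (\<i> * of_real (exp t))))"

definition closed_on_M :: "(real \<Rightarrow> complex) \<Rightarrow> bool" where
  "closed_on_M \<gamma> \<longleftrightarrow> (\<exists>T>0. \<exists>g\<in>SL2Z. \<forall>t. \<gamma> (t + T) = moeb (of_int_mat g) (\<gamma> t))"

definition S_set :: "(real \<times> real) set" where
  "S_set = {(x,y). (1 < x \<and> x < 2 \<and> y < 1) \<or> (-2 < x \<and> x < -1 \<and> -1 < y)}"

fun lconv :: "(nat \<Rightarrow> int \<times> int) \<Rightarrow> nat \<Rightarrow> real" where
  "lconv d 0 = of_int (fst (d 0))"
| "lconv d (Suc n) = of_int (fst (d 0)) + of_int (snd (d 0)) / lconv (\<lambda>i. d (Suc i)) n"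

fun fconv :: "(nat \<Rightarrow> int \<times> int) \<Rightarrow> nat \<Rightarrow> real" where
  "fconv d 0 = of_int (fst (d 0)) / of_int (snd (d 0))"
| "fconv d (Suc n) = of_int (fst (d 0)) / (of_int (snd (d 0)) + fconv (\<lambda>i. d (Suc i)) n)"

end

theory Submission
  imports Defs
begin

definition mm :: "'a::comm_ring_1 \<times> 'a \<times> 'a \<times> 'a \<Rightarrow> 'a \<times> 'a \<times> 'a \<times> 'a \<Rightarrow> 'a \<times> 'a \<times> 'a \<times> 'a" where
  "mm A B = (case A of (a,b,c,d) \<Rightarrow> case B of (e,f,g,h) \<Rightarrow> (a*e+b*g, a*f+b*h, c*e+d*g, c*f+d*h))"

definition dt :: "'a::comm_ring_1 \<times> 'a \<times> 'a \<times> 'a \<Rightarrow> 'a" where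
  "dt A = (case A of (a,b,c,d) \<Rightarrow> a*d-b*c)"

definition iv :: "'a::comm_ring_1 \<times> 'a \<times> 'a \<times> 'a \<Rightarrow> 'a \<times> 'a \<times> 'a \<times> 'a" where
  "iv A = (case A of (a,b,c,d) \<Rightarrow> (d,-b,-c,a))"

lemma mm_simp[simp]: "mm (a,b,c,d) (e,f,g,h) = (a*e+b*g, a*f+b*h, c*e+d*g, c*f+d*h)"
  by (simp add: mm_def)
lemma dt_simp[simp]: "dt (a,b,c,d) = a*d-b*c" by (simp add: dt_def)
lemma iv_simp[simp]: "iv (a,b,c,d) = (d,-b,-c,a)" by (simp add: iv_def)

lemma mm_assoc: "mm (mm A B) C = mm A (mm B C)"
  by (cases A; cases B; cases C) (simp add: algebra_simps)

lemma dt_mm: "dt (mm A B) = dt A * dt B"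
  by (cases A; cases B) (simp add: algebra_simps)

lemma mm_iv: "dt A = 1 \<Longrightarrow> mm A (iv A) = (1,0,0,1)"
  by (cases A) (simp add: algebra_simps)
lemma iv_mm: "dt A = 1 \<Longrightarrow> mm (iv A) A = (1,0,0,1)"
  by (cases A) (simp add: algebra_simps)
lemma mm_I[simp]: "mm A (1,0,0,1) = A" "mm (1,0,0,1) A = A"
  by (cases A; simp)+
lemma dt_iv[simp]: "dt (iv A) = dt A" by (cases A) (simp add: algebra_simps)
lemma iv_mm_distrib: "iv (mm A B) = mm (iv B) (iv A)"
  by (cases A; cases B) (simp add: algebra_simps)

lemma of_int_mat_simp[simp]: "of_int_mat (a,b,c,d) = (of_int a, of_int b, of_int c, of_int d)"
  by (simp add: of_int_mat_def)
lemma of_int_mat_mm: "of_int_mat (mm A B) = mm (of_int_mat A) (of_int_mat B)"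
  by (cases A; cases B) simp
lemma dt_of_int_mat: "dt (of_int_mat A) = of_int (dt A)"
  by (cases A) simp
lemma of_int_mat_iv: "of_int_mat (iv A) = iv (of_int_mat A)"
  by (cases A) simp

lemma SL2Z_dt: "A \<in> SL2Z \<longleftrightarrow> dt A = 1"
  by (cases A) (simp add: SL2Z_def)

lemma moeb_simp: "moeb (a,b,c,d) z = (of_real a * z + of_real b) / (of_real c * z + of_real d)"
  by (simp add: moeb_def)

lemma den_nz: "Im z > 0 \<Longrightarrow> (c::real) \<noteq> 0 \<or> d \<noteq> 0 \<Longrightarrow> of_real c * z + of_real d \<noteq> 0"
proof
  assume "Im z > 0" "c \<noteq> 0 \<or> d \<noteq> 0" "of_real c * z + of_real d = 0"
  then have "Im (of_real c * z + of_real d) = 0" "Re (of_real c * z + of_real d) = 0" by auto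
  then have "c * Im z = 0" "c * Re z + d = 0" by auto
  with \<open>Im z > 0\<close> \<open>c \<noteq> 0 \<or> d \<noteq> 0\<close> show False by auto
qed

lemma Im_moeb: assumes "Im z > 0" "a*d - b*c > (0::real)"
  shows "Im (moeb (a,b,c,d) z) > 0"
proof -
  have cd: "c \<noteq> 0 \<or> d \<noteq> 0" using assms(2) by auto
  have nz: "of_real c * z + of_real d \<noteq> 0" using den_nz[OF assms(1) cd] .
  let ?w = "of_real c * z + of_real d"
  have pos: "(Re ?w)^2 + (Im ?w)^2 > 0" using nz
    by (metis complex_eq_iff add_pos_nonneg sum_power2_gt_zero_iff zero_complex.simps(1) zero_complex.simps(2))
  have "Im (moeb (a,b,c,d) z) = (a*d - b*c) * Im z / ((Re ?w)^2 + (Im ?w)^2)"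
    unfolding moeb_simp
    by (simp add: Im_divide algebra_simps power2_eq_square)
  also have "\<dots> > 0" using assms pos by (simp add: divide_pos_pos)
  finally show ?thesis .
qed

lemma moeb_comp:
  assumes "Im z > 0" "dt K > (0::real)" "dt M \<noteq> 0"
  shows "moeb M (moeb K z) = moeb (mm M K) z"
proof -
  obtain a b c d where M: "M = (a,b,c,d)" by (cases M) auto
  obtain e f g h where K: "K = (e,f,g,h)" by (cases K) auto
  have gh: "g \<noteq> 0 \<or> h \<noteq> 0" using assms(2) K by auto
  have nz1: "of_real g * z + of_real h \<noteq> 0"
    using den_nz[OF assms(1) gh] .
  have w: "Im (moeb K z) > 0" using Im_moeb[OF assms(1)] assms(2) K by auto
  have cd: "c \<noteq> 0 \<or> d \<noteq> 0" using assms(3) M by auto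
  have nz2: "of_real c * moeb K z + of_real d \<noteq> 0"
    using den_nz[OF w cd] .
  have nz3: "of_real c * (of_real e * z + of_real f) + of_real d * (of_real g * z + of_real h) \<noteq> 0"
    using nz2 nz1 unfolding K moeb_simp by (simp add: field_simps)
  let ?u = "of_real e * z + of_real f" and ?v = "of_real g * z + of_real h"
  have "moeb M (moeb K z) = (of_real a * ?u + of_real b * ?v) / (of_real c * ?u + of_real d * ?v)"
    unfolding M K moeb_simp using nz1 by (simp add: divide_simps)
  also have "\<dots> = moeb (mm M K) z"
    unfolding M K moeb_simp mm_simp by (simp add: algebra_simps)
  finally show ?thesis .
qed

lemma moeb_I[simp]: "moeb (1,0,0,1) z = z" by (simp add: moeb_simp)

lemma moeb_neg: "moeb (-a,-b,-c,-d) z = moeb (a,b,c,d) z"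
proof -
  have "moeb (-a,-b,-c,-d) z = (-(of_real a * z + of_real b)) / (-(of_real c * z + of_real d))"
    unfolding moeb_simp by simp
  then show ?thesis unfolding moeb_simp by (simp only: minus_divide_divide)
qed

lemma norm_lower_Im: "\<bar>Im w\<bar> \<le> norm w" by (rule abs_Im_le_cmod)

lemma lim_top_pos:
  assumes "\<alpha>*\<delta> - \<beta>*\<gamma> = (1::real)" "\<gamma> \<noteq> 0"
  shows "((\<lambda>t. moeb (\<alpha>,\<beta>,\<gamma>,\<delta>) (\<i> * of_real (exp t))) \<longlongrightarrow> of_real (\<alpha>/\<gamma>)) at_top"
proof -
  define D where "D t = of_real \<gamma> * (of_real \<gamma> * (\<i> * of_real (exp t)) + of_real \<delta>)" for t
  have Dnorm: "norm (D t) \<ge> \<gamma>^2 * exp t" for t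
  proof -
    have "\<bar>Im (of_real \<gamma> * (\<i> * of_real (exp t)) + of_real \<delta>)\<bar> = \<bar>\<gamma>\<bar> * exp t" by (simp add: abs_mult)
    then have "norm (of_real \<gamma> * (\<i> * of_real (exp t)) + of_real \<delta>) \<ge> \<bar>\<gamma>\<bar> * exp t"
      by (metis abs_Im_le_cmod)
    then have "\<bar>\<gamma>\<bar> * norm (of_real \<gamma> * (\<i> * of_real (exp t)) + (of_real \<delta>::complex)) \<ge> \<bar>\<gamma>\<bar> * (\<bar>\<gamma>\<bar> * exp t)"
      by (simp add: mult_left_mono)
    moreover have "\<bar>\<gamma>\<bar> * (\<bar>\<gamma>\<bar> * exp t) = \<gamma>^2 * exp t"
      by (simp add: power2_eq_square abs_mult_self_eq)
    moreover have "norm (D t) = \<bar>\<gamma>\<bar> * norm (of_real \<gamma> * (\<i> * of_real (exp t)) + (of_real \<delta>::complex))"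
      unfolding D_def by (simp add: norm_mult)
    ultimately show ?thesis by simp
  qed
  have Dpos: "\<gamma>^2 * exp t > 0" for t using assms(2) by simp
  have Dnz: "D t \<noteq> 0" for t using Dnorm[of t] Dpos[of t] by auto
  have eq: "moeb (\<alpha>,\<beta>,\<gamma>,\<delta>) (\<i> * of_real (exp t)) = of_real (\<alpha>/\<gamma>) - 1 / D t" for t
  proof -
    define w where "w = \<i> * (of_real (exp t)::complex)"
    define den where "den = of_real \<gamma> * w + of_real \<delta>"
    have Dd: "D t = of_real \<gamma> * den" unfolding D_def den_def w_def by simp
    have g0: "(of_real \<gamma>::complex) \<noteq> 0" using assms(2) by simp
    have nz: "den \<noteq> 0" using Dnz[of t] Dd by auto
    have h: "of_real \<alpha> * of_real \<delta> = 1 + of_real \<beta> * (of_real \<gamma>::complex)"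
      using assms(1) by (metis add_diff_cancel_left' diff_add_cancel of_real_1 of_real_add of_real_mult)
    have "of_real (\<alpha>/\<gamma>) - 1 / D t = (of_real \<alpha> * den - 1) / (of_real \<gamma> * den)"
      unfolding Dd using g0 nz by (simp add: divide_simps)
    also have "of_real \<alpha> * den - 1 = of_real \<gamma> * (of_real \<alpha> * w + of_real \<beta>)"
      unfolding den_def by (simp add: algebra_simps h)
    also have "of_real \<gamma> * (of_real \<alpha> * w + of_real \<beta>) / (of_real \<gamma> * den) = (of_real \<alpha> * w + of_real \<beta>) / den"
      using g0 by simp
    finally have calc: "of_real (\<alpha>/\<gamma>) - 1 / D t = (of_real \<alpha> * w + of_real \<beta>) / den" .
    have m: "moeb (\<alpha>,\<beta>,\<gamma>,\<delta>) (\<i> * of_real (exp t)) = (of_real \<alpha> * w + of_real \<beta>) / den"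
      unfolding moeb_simp den_def w_def by simp
    show ?thesis by (simp only: m calc)
  qed
  have "((\<lambda>t. 1 / D t) \<longlongrightarrow> 0) at_top"
  proof (rule Lim_null_comparison)
    show "\<forall>\<^sub>F t in at_top. norm (1 / D t) \<le> inverse (\<gamma>^2 * exp t)"
      using Dnorm Dpos by (auto simp: norm_divide divide_simps intro!: always_eventually)
    show "((\<lambda>t. inverse (\<gamma>^2 * exp t)) \<longlongrightarrow> 0) at_top"
      by (rule tendsto_inverse_0_at_top, rule filterlim_tendsto_pos_mult_at_top[OF tendsto_const])
        (use assms(2) exp_at_top in auto)
  qed
  then have "((\<lambda>t. of_real (\<alpha>/\<gamma>) - 1 / D t) \<longlongrightarrow> of_real (\<alpha>/\<gamma>) - 0) at_top"
    by (intro tendsto_intros)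
  then show ?thesis by (simp add: eq)
qed

lemma lim_top_zero:
  assumes "\<alpha>*\<delta> - \<beta>*\<gamma> = (1::real)" "\<gamma> = 0"
  shows "\<not> ((\<lambda>t. moeb (\<alpha>,\<beta>,\<gamma>,\<delta>) (\<i> * of_real (exp t))) \<longlongrightarrow> L) at_top"
proof
  assume lim: "((\<lambda>t. moeb (\<alpha>,\<beta>,\<gamma>,\<delta>) (\<i> * of_real (exp t))) \<longlongrightarrow> L) at_top"
  have ad: "\<alpha> * \<delta> = 1" using assms by simp
  then have a0: "\<alpha> \<noteq> 0" and d0: "\<delta> \<noteq> 0" by auto
  have low: "norm (moeb (\<alpha>,\<beta>,\<gamma>,\<delta>) (\<i> * of_real (exp t))) \<ge> (\<bar>\<alpha>\<bar>/\<bar>\<delta>\<bar>) * exp t" for t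
  proof -
    have "moeb (\<alpha>,\<beta>,\<gamma>,\<delta>) (\<i> * of_real (exp t)) = (of_real \<alpha> * (\<i> * of_real (exp t)) + of_real \<beta>) / of_real \<delta>"
      unfolding moeb_simp using assms(2) by simp
    moreover have "\<bar>Im (of_real \<alpha> * (\<i> * of_real (exp t)) + of_real \<beta>)\<bar> = \<bar>\<alpha>\<bar> * exp t" by (simp add: abs_mult)
    then have "norm (of_real \<alpha> * (\<i> * of_real (exp t)) + (of_real \<beta>::complex)) \<ge> \<bar>\<alpha>\<bar> * exp t"
      by (metis abs_Im_le_cmod)
    ultimately show ?thesis using d0 by (simp add: norm_divide divide_right_mono)
  qed
  have "filterlim (\<lambda>t. (\<bar>\<alpha>\<bar>/\<bar>\<delta>\<bar>) * exp t) at_top at_top"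
    by (rule filterlim_tendsto_pos_mult_at_top[OF tendsto_const]) (use a0 d0 exp_at_top in auto)
  then have "filterlim (\<lambda>t. norm (moeb (\<alpha>,\<beta>,\<gamma>,\<delta>) (\<i> * of_real (exp t)))) at_top at_top"
    by (rule filterlim_at_top_mono) (use low in auto)
  then have "filterlim (\<lambda>t. moeb (\<alpha>,\<beta>,\<gamma>,\<delta>) (\<i> * of_real (exp t))) at_infinity at_top"
    by (rule filterlim_norm_at_top_imp_at_infinity)
  from not_tendsto_and_filterlim_at_infinity[OF _ lim this] show False by simp
qed

lemma lim_bot_pos:
  assumes "\<delta> \<noteq> (0::real)"
  shows "((\<lambda>t. moeb (\<alpha>,\<beta>,\<gamma>,\<delta>) (\<i> * of_real (exp t))) \<longlongrightarrow> of_real (\<beta>/\<delta>)) at_bot"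
proof -
  have e: "((\<lambda>t. of_real (exp t)::complex) \<longlongrightarrow> of_real 0) at_bot"
    by (rule tendsto_of_real[OF exp_at_bot])
  have "((\<lambda>t. (of_real \<alpha> * (\<i> * of_real (exp t)) + of_real \<beta>) / (of_real \<gamma> * (\<i> * of_real (exp t)) + of_real \<delta>))
      \<longlongrightarrow> (of_real \<alpha> * (\<i> * of_real 0) + of_real \<beta>) / (of_real \<gamma> * (\<i> * of_real 0) + (of_real \<delta>::complex))) at_bot"
    by (intro tendsto_intros e) (use assms in simp)
  then show ?thesis unfolding moeb_simp by simp
qed

lemma lim_bot_zero:
  assumes "\<alpha>*\<delta> - \<beta>*\<gamma> = (1::real)" "\<delta> = 0"
  shows "\<not> ((\<lambda>t. moeb (\<alpha>,\<beta>,\<gamma>,\<delta>) (\<i> * of_real (exp t))) \<longlongrightarrow> L) at_bot"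
proof
  assume lim: "((\<lambda>t. moeb (\<alpha>,\<beta>,\<gamma>,\<delta>) (\<i> * of_real (exp t))) \<longlongrightarrow> L) at_bot"
  have bc: "\<beta> * \<gamma> = -1" using assms by simp
  then have b0: "\<beta> \<noteq> 0" and c0: "\<gamma> \<noteq> 0" by auto
  have low: "norm (moeb (\<alpha>,\<beta>,\<gamma>,\<delta>) (\<i> * of_real (exp t))) \<ge> (\<bar>\<beta>\<bar>/\<bar>\<gamma>\<bar>) * exp (-t)" for t
  proof -
    have "moeb (\<alpha>,\<beta>,\<gamma>,\<delta>) (\<i> * of_real (exp t)) = (of_real \<alpha> * (\<i> * of_real (exp t)) + of_real \<beta>) / (of_real \<gamma> * (\<i> * of_real (exp t)))"
      unfolding moeb_simp using assms(2) by simp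
    moreover have "\<bar>Re (of_real \<alpha> * (\<i> * of_real (exp t)) + of_real \<beta>)\<bar> = \<bar>\<beta>\<bar>" by simp
    then have "norm (of_real \<alpha> * (\<i> * of_real (exp t)) + (of_real \<beta>::complex)) \<ge> \<bar>\<beta>\<bar>"
      by (metis abs_Re_le_cmod)
    moreover have "norm (of_real \<gamma> * (\<i> * of_real (exp t)) :: complex) = \<bar>\<gamma>\<bar> * exp t"
      by (simp add: norm_mult)
    ultimately have "norm (moeb (\<alpha>,\<beta>,\<gamma>,\<delta>) (\<i> * of_real (exp t))) \<ge> \<bar>\<beta>\<bar> / (\<bar>\<gamma>\<bar> * exp t)"
      using c0 by (simp add: norm_divide divide_right_mono)
    moreover have "\<bar>\<beta>\<bar> / (\<bar>\<gamma>\<bar> * exp t) = (\<bar>\<beta>\<bar>/\<bar>\<gamma>\<bar>) * exp (-t)"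
      by (simp add: exp_minus field_simps)
    ultimately show ?thesis by simp
  qed
  have "filterlim (\<lambda>t. (\<bar>\<beta>\<bar>/\<bar>\<gamma>\<bar>) * exp t) at_top at_top"
    by (rule filterlim_tendsto_pos_mult_at_top[OF tendsto_const]) (use b0 c0 exp_at_top in auto)
  then have "filterlim (\<lambda>t. (\<bar>\<beta>\<bar>/\<bar>\<gamma>\<bar>) * exp (-t)) at_top at_bot"
    by (simp add: filterlim_at_bot_mirror)
  then have "filterlim (\<lambda>t. norm (moeb (\<alpha>,\<beta>,\<gamma>,\<delta>) (\<i> * of_real (exp t)))) at_top at_bot"
    by (rule filterlim_at_top_mono) (use low in auto)
  then have "filterlim (\<lambda>t. moeb (\<alpha>,\<beta>,\<gamma>,\<delta>) (\<i> * of_real (exp t))) at_infinity at_bot"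
    by (rule filterlim_norm_at_top_imp_at_infinity)
  from not_tendsto_and_filterlim_at_infinity[OF _ lim this] show False by simp
qed

lemma lim_top_iff:
  assumes "\<alpha>*\<delta> - \<beta>*\<gamma> = (1::real)"
  shows "((\<lambda>t. moeb (\<alpha>,\<beta>,\<gamma>,\<delta>) (\<i> * of_real (exp t))) \<longlongrightarrow> of_real x) at_top \<longleftrightarrow> \<gamma> \<noteq> 0 \<and> x = \<alpha>/\<gamma>"
proof
  assume L: "((\<lambda>t. moeb (\<alpha>,\<beta>,\<gamma>,\<delta>) (\<i> * of_real (exp t))) \<longlongrightarrow> of_real x) at_top"
  have g: "\<gamma> \<noteq> 0"
  proof
    assume "\<gamma> = 0"
    from lim_top_zero[OF assms this, of "of_real x"] L show False by (rule notE)
  qed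
  have nb: "at_top \<noteq> (bot :: real filter)" by simp
  from tendsto_unique[OF nb L lim_top_pos[OF assms g]] have "(of_real x::complex) = of_real (\<alpha>/\<gamma>)" .
  then have "x = \<alpha>/\<gamma>" by (rule of_real_eq_iff[THEN iffD1])
  with g show "\<gamma> \<noteq> 0 \<and> x = \<alpha>/\<gamma>" by (rule conjI)
next
  assume h: "\<gamma> \<noteq> 0 \<and> x = \<alpha>/\<gamma>"
  then have "x = \<alpha>/\<gamma>" by (rule conjunct2)
  then show "((\<lambda>t. moeb (\<alpha>,\<beta>,\<gamma>,\<delta>) (\<i> * of_real (exp t))) \<longlongrightarrow> of_real x) at_top"
    using lim_top_pos[OF assms conjunct1[OF h]] by (simp only:)
qed

lemma lim_bot_iff:
  assumes "\<alpha>*\<delta> - \<beta>*\<gamma> = (1::real)"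
  shows "((\<lambda>t. moeb (\<alpha>,\<beta>,\<gamma>,\<delta>) (\<i> * of_real (exp t))) \<longlongrightarrow> of_real y) at_bot \<longleftrightarrow> \<delta> \<noteq> 0 \<and> y = \<beta>/\<delta>"
proof
  assume L: "((\<lambda>t. moeb (\<alpha>,\<beta>,\<gamma>,\<delta>) (\<i> * of_real (exp t))) \<longlongrightarrow> of_real y) at_bot"
  have g: "\<delta> \<noteq> 0"
  proof
    assume "\<delta> = 0"
    from lim_bot_zero[OF assms this, of "of_real y"] L show False by (rule notE)
  qed
  have nb: "at_bot \<noteq> (bot :: real filter)" by simp
  from tendsto_unique[OF nb L lim_bot_pos[OF g]] have "(of_real y::complex) = of_real (\<beta>/\<delta>)" .
  then have "y = \<beta>/\<delta>" by (rule of_real_eq_iff[THEN iffD1])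
  with g show "\<delta> \<noteq> 0 \<and> y = \<beta>/\<delta>" by (rule conjI)
next
  assume h: "\<delta> \<noteq> 0 \<and> y = \<beta>/\<delta>"
  then have "y = \<beta>/\<delta>" by (rule conjunct2)
  then show "((\<lambda>t. moeb (\<alpha>,\<beta>,\<gamma>,\<delta>) (\<i> * of_real (exp t))) \<longlongrightarrow> of_real y) at_bot"
    using lim_bot_pos[OF conjunct1[OF h]] by (simp only:)
qed

definition Inv :: "int\<times>int\<times>int\<times>int \<Rightarrow> real\<times>real\<times>real\<times>real \<Rightarrow> real \<Rightarrow> bool" where
  "Inv P N l \<longleftrightarrow> dt P = 1 \<and> dt N = 1 \<and> l > 1 \<and> mm (of_int_mat P) N = mm N (l,0,0,1/l)"

definition conj :: "int\<times>int\<times>int\<times>int \<Rightarrow> int\<times>int\<times>int\<times>int \<Rightarrow> int\<times>int\<times>int\<times>int" where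
  "conj k P = mm (mm k P) (iv k)"

lemma Inv_conj:
  assumes "Inv P N l" "dt k = 1"
  shows "Inv (conj k P) (mm (of_int_mat k) N) l"
proof -
  let ?K = "of_int_mat k" and ?P = "of_int_mat P"
  have dK: "dt ?K = 1" using assms(2) by (simp add: dt_of_int_mat)
  have "mm (of_int_mat (conj k P)) (mm ?K N) = mm (mm (mm ?K ?P) (iv ?K)) (mm ?K N)"
    by (simp add: conj_def of_int_mat_mm of_int_mat_iv)
  also have "\<dots> = mm ?K (mm ?P (mm (mm (iv ?K) ?K) N))" by (simp add: mm_assoc)
  also have "\<dots> = mm ?K (mm ?P N)" using iv_mm[OF dK] by simp
  also have "\<dots> = mm (mm ?K N) (l,0,0,1/l)" using assms(1) by (simp add: Inv_def mm_assoc)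
  finally show ?thesis using assms dK
    by (simp add: Inv_def conj_def dt_mm)
qed

lemma dt_conj: "dt k = 1 \<Longrightarrow> dt (conj k P) = dt P"
  by (simp add: conj_def dt_mm)

lemma conj_conj: "dt k1 = 1 \<Longrightarrow> dt k2 = 1 \<Longrightarrow> conj k2 (conj k1 P) = conj (mm k2 k1) P"
  by (simp add: conj_def mm_assoc iv_mm_distrib)

lemma Inv_facts:
  assumes I: "Inv (a,b,c,d) (\<alpha>,\<beta>,\<gamma>,\<delta>) l" and x: "x = \<alpha>/\<gamma>" and y: "y = \<beta>/\<delta>"
  shows "c \<noteq> 0" "\<gamma> \<noteq> 0" "\<delta> \<noteq> 0" "of_int c * x + of_int d = l" "of_int c * y + of_int d = 1/l"
    "of_int a * x + of_int b = l * x" "of_int a * y + of_int b = y / l" "x \<noteq> y"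
    "of_int c * (x + y) = of_int a - of_int d" "of_int c * x * y = - of_int b"
    "of_int a + of_int d = l + 1/l" "l > 1"
proof -
  have l1: "l > 1" and dP: "a*d - b*c = 1" and dN: "\<alpha>*\<delta> - \<beta>*\<gamma> = 1"
    and e: "mm (of_int_mat (a,b,c,d)) (\<alpha>,\<beta>,\<gamma>,\<delta>) = mm (\<alpha>,\<beta>,\<gamma>,\<delta>) (l,0,0,1/l)"
    using I by (auto simp: Inv_def)
  then have e1: "of_int a * \<alpha> + of_int b * \<gamma> = \<alpha> * l" and e2: "of_int a * \<beta> + of_int b * \<delta> = \<beta> / l"
    and e3: "of_int c * \<alpha> + of_int d * \<gamma> = \<gamma> * l" and e4: "of_int c * \<beta> + of_int d * \<delta> = \<delta> / l"
    by auto
  show "l > 1" by fact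
  have lne: "l \<noteq> 1/l"
  proof
    assume "l = 1/l"
    then have "l*l = 1" using l1 by (simp add: field_simps)
    moreover have "l*l > 1" using l1 less_1_mult by fastforce
    ultimately show False by simp
  qed
  show c0: "c \<noteq> 0"
  proof
    assume c: "c = 0"
    then have "a * d = 1" using dP by simp
    then have "d = 1 \<or> d = -1" using zmult_eq_1_iff by blast
    then have dr: "of_int d = (1::real) \<or> of_int d = (-1::real)" by auto
    have "of_int d \<noteq> l" "of_int d \<noteq> 1/l" using dr l1 by (auto simp: field_simps)
    have "\<gamma> * (of_int d - l) = 0" using e3 c by (simp add: algebra_simps)
    then have g: "\<gamma> = 0" using \<open>of_int d \<noteq> l\<close> by simp
    have "\<delta> * (of_int d - 1/l) = 0" using e4 c by (simp add: algebra_simps)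
    then have "\<delta> = 0" using \<open>of_int d \<noteq> 1/l\<close> by simp
    note g this
    then show False using dN by simp
  qed
  show g0: "\<gamma> \<noteq> 0"
  proof
    assume "\<gamma> = 0"
    then have "\<alpha> \<noteq> 0" "of_int c * \<alpha> = 0" using dN e3 by auto
    then show False using c0 by simp
  qed
  show d0: "\<delta> \<noteq> 0"
  proof
    assume "\<delta> = 0"
    then have "\<beta> \<noteq> 0" "of_int c * \<beta> = 0" using dN e4 by auto
    then show False using c0 by simp
  qed
  have ax: "\<alpha> = x * \<gamma>" using x g0 by simp
  have by': "\<beta> = y * \<delta>" using y d0 by simp
  have hh1: "\<gamma> * (of_int c * x + of_int d) = \<gamma> * l" using e3 unfolding ax by (simp add: algebra_simps)
  show fx: "of_int c * x + of_int d = l" using hh1[unfolded mult_left_cancel[OF g0]] .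
  have hh2: "\<delta> * (of_int c * y + of_int d) = \<delta> * (1/l)" using e4 unfolding by' by (simp add: algebra_simps)
  show fy: "of_int c * y + of_int d = 1/l" using hh2[unfolded mult_left_cancel[OF d0]] .
  have hh3: "\<gamma> * (of_int a * x + of_int b) = \<gamma> * (l * x)" using e1 unfolding ax by (simp add: algebra_simps)
  show fx2: "of_int a * x + of_int b = l * x" using hh3[unfolded mult_left_cancel[OF g0]] .
  have hh4: "\<delta> * (of_int a * y + of_int b) = \<delta> * (y / l)" using e2 unfolding by' by (simp add: algebra_simps)
  show fy2: "of_int a * y + of_int b = y / l" using hh4[unfolded mult_left_cancel[OF d0]] .
  show xy: "x \<noteq> y" using fx fy lne by auto
  have "of_int a * (x - y) = (of_int a * x + of_int b) - (of_int a * y + of_int b)" by (simp add: algebra_simps)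
  also have "\<dots> = l * x - y * (1/l)" unfolding fx2 fy2 by simp
  also have "\<dots> = (of_int c * x + of_int d) * x - (of_int c * y + of_int d) * y"
    unfolding fx fy by (simp add: algebra_simps)
  also have "\<dots> = (x - y) * (of_int c * (x + y) + of_int d)" by (simp add: algebra_simps)
  finally have "(x - y) * of_int a = (x - y) * (of_int c * (x + y) + of_int d)" by (simp add: mult.commute)
  then have "of_int a = of_int c * (x + y) + of_int d" using xy by simp
  then show s: "of_int c * (x + y) = of_int a - of_int d" by simp
  have b1: "of_int b = l * x - of_int a * x" using fx2 by linarith
  have a1: "of_int a = of_int c * (x + y) + of_int d" using s by linarith
  have "of_int b = (of_int c * x + of_int d) * x - (of_int c * (x + y) + of_int d) * x"
    using b1 unfolding fx a1[symmetric] .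
  then show "of_int c * x * y = - of_int b" by (simp add: algebra_simps)
  show "of_int a + of_int d = l + 1/l" using fx fy s by (simp add: algebra_simps)
qed

definition negm :: "'a::comm_ring_1 \<times> 'a \<times> 'a \<times> 'a \<Rightarrow> 'a \<times> 'a \<times> 'a \<times> 'a" where
  "negm A = (case A of (a,b,c,d) \<Rightarrow> (-a,-b,-c,-d))"
lemma negm_simp[simp]: "negm (a,b,c,d) = (-a,-b,-c,-d)" by (simp add: negm_def)
lemma mm_negm: "mm (negm A) B = negm (mm A B)" "mm A (negm B) = negm (mm A B)"
  by (cases A; cases B; simp add: algebra_simps)+
lemma negm_negm: "negm (negm A) = A" by (cases A) simp
lemma dt_negm[simp]: "dt (negm A) = dt A" by (cases A) simp
lemma of_int_mat_negm: "of_int_mat (negm A) = negm (of_int_mat A)" by (cases A) simp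

lemma moeb_K_comp:
  assumes K: "K = (k1,k2,k3,k4)" "dt K = (1::real)" and u: "u > 0"
    and e: "moeb K (\<i> * of_real u) = \<i> * of_real (E * u)"
  shows "k2 = - E * k3 * u^2" "k1 = E * k4"
proof -
  have Im: "Im (\<i> * of_real u) > 0" using u by simp
  have cd: "k3 \<noteq> 0 \<or> k4 \<noteq> 0" using K by auto
  have nz: "of_real k3 * (\<i> * of_real u) + of_real k4 \<noteq> 0" using den_nz[OF Im cd] .
  have "of_real k1 * (\<i> * of_real u) + of_real k2 = (\<i> * of_real (E * u)) * (of_real k3 * (\<i> * of_real u) + of_real k4)"
    using e nz unfolding K moeb_simp by (simp add: divide_eq_eq)
  then have eq: "Complex k2 (k1 * u) = Complex (- E * u * u * k3) (E * u * k4)"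
    by (simp add: complex_eq_iff algebra_simps)
  then show "k2 = - E * k3 * u^2" by (simp add: power2_eq_square algebra_simps)
  have "k1 * u = E * k4 * u" using eq by (simp add: algebra_simps)
  then show "k1 = E * k4" using u by simp
qed

lemma closed_Inv:
  assumes H: "H = (a,b,c,d)" "dt H = (1::real)"
    and gam: "\<And>t. \<gamma> t = moeb H (\<i> * of_real (exp t))"
    and T: "T > 0" and g: "dt g = 1"
    and per: "\<And>t. \<gamma> (t + T) = moeb (of_int_mat g) (\<gamma> t)"
  shows "\<exists>P l. Inv P H l"
proof -
  let ?G = "of_int_mat g"
  define K where "K = mm (iv H) (mm ?G H)"
  have dG: "dt ?G = 1" using g by (simp add: dt_of_int_mat)
  have dK: "dt K = 1" unfolding K_def using dG H(2) by (simp add: dt_mm)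
  have Kact: "moeb K (\<i> * of_real u) = \<i> * of_real (exp T * u)" if u: "u > 0" for u
  proof -
    define t where "t = ln u"
    have ut: "u = exp t" using u t_def by simp
    have z: "Im (\<i> * of_real (exp t)) > 0" by simp
    have z2: "Im (\<i> * of_real (exp (t+T))) > 0" by simp
    have "moeb K (\<i> * of_real (exp t)) = moeb (iv H) (moeb (mm ?G H) (\<i> * of_real (exp t)))"
      unfolding K_def by (rule moeb_comp[symmetric]) (use z dG H(2) in \<open>auto simp: dt_mm\<close>)
    also have "moeb (mm ?G H) (\<i> * of_real (exp t)) = moeb ?G (moeb H (\<i> * of_real (exp t)))"
      by (rule moeb_comp[symmetric]) (use z dG H(2) in auto)
    also have "\<dots> = \<gamma> (t + T)" using gam per by simp
    also have "\<dots> = moeb H (\<i> * of_real (exp (t+T)))" using gam by simp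
    also have "moeb (iv H) \<dots> = moeb (mm (iv H) H) (\<i> * of_real (exp (t+T)))"
      by (rule moeb_comp) (use z2 H(2) in auto)
    also have "\<dots> = \<i> * of_real (exp (t+T))" using iv_mm[OF H(2)] by simp
    finally show ?thesis unfolding ut by (simp add: exp_add mult.commute)
  qed
  obtain k1 k2 k3 k4 where Kc: "K = (k1,k2,k3,k4)" by (cases K) auto
  have r1: "k2 = - exp T * k3 * 1^2" "k1 = exp T * k4"
    using moeb_K_comp[OF Kc dK, of 1 "exp T"] Kact[of 1] by auto
  have r2: "k2 = - exp T * k3 * 2^2"
    using moeb_K_comp[OF Kc dK, of 2 "exp T"] Kact[of 2] by auto
  have k3: "k3 = 0" using r1(1) r2 by simp
  then have k2: "k2 = 0" using r1(1) by simp
  have det: "k1 * k4 = 1" using dK Kc k3 by simp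
  define l where "l = exp (T/2)"
  have l1: "l > 1" unfolding l_def using T by simp
  have El: "exp T = l^2" unfolding l_def by (simp add: power2_eq_square exp_add[symmetric])
  have "(k4 * l)^2 = 1" using det r1(2) El by (simp add: power2_eq_square algebra_simps)
  then have k4l: "k4 * l = 1 \<or> k4 * l = -1" using power2_eq_1_iff by blast
  have GH: "mm ?G H = mm H K"
  proof -
    have "mm H K = mm (mm H (iv H)) (mm ?G H)" unfolding K_def by (simp add: mm_assoc)
    then show ?thesis using mm_iv[OF H(2)] by simp
  qed
  show ?thesis
  proof (cases "k4 * l = 1")
    case True
    have k1e: "k1 = l * (k4 * l)" using r1(2) El by (simp add: power2_eq_square algebra_simps)
    have "k4 = 1/l" "k1 = l" using True l1 k1e by (auto simp: field_simps)
    then have "K = (l,0,0,1/l)" using Kc k2 k3 by simp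
    then have "Inv g H l" unfolding Inv_def using g H(2) l1 GH by simp
    then show ?thesis by blast
  next
    case False
    then have "k4 * l = -1" using k4l by simp
    have k1e: "k1 = l * (k4 * l)" using r1(2) El by (simp add: power2_eq_square algebra_simps)
    have "k4 = -(1/l)" "k1 = -l" using \<open>k4 * l = -1\<close> l1 k1e by (auto simp: field_simps)
    then have "K = negm (l,0,0,1/l)" using Kc k2 k3 by simp
    then have "mm (of_int_mat (negm g)) H = mm H (l,0,0,1/l)"
    proof -
      have e: "mm H (-l,0,0,-(1/l)) = negm (mm H (l,0,0,1/l))" by (cases H) simp
      have "mm (of_int_mat (negm g)) H = negm (mm ?G H)" by (simp add: of_int_mat_negm mm_negm)
      also have "\<dots> = negm (mm H K)" using GH by simp
      also have "\<dots> = mm H (l,0,0,1/l)" using \<open>K = negm (l,0,0,1/l)\<close> e by (simp add: negm_negm)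
      finally show ?thesis .
    qed
    then have "Inv (negm g) H l" unfolding Inv_def using g H(2) l1 by simp
    then show ?thesis by blast
  qed
qed

lemma conj_R: "conj (1,m,0,1) (a,b,c,d) = (a+m*c, b + m*(d-a) - m*m*c, c, d - m*c)"
  by (simp add: conj_def algebra_simps)
lemma conj_S: "conj (0,-1,1,0) (a,b,c,d) = (d,-c,-b,a)"
  by (simp add: conj_def)

lemma c_nz: fixes a b c d :: int assumes "a*d - b*c = 1" "\<bar>a+d\<bar> > 2" shows "c \<noteq> 0" "b \<noteq> 0"
proof -
  { assume "b*c = 0"
    then have "a*d = 1" using assms(1) by linarith
    then have "(a = 1 \<and> d = 1) \<or> (a = -1 \<and> d = -1)" using zmult_eq_1_iff by auto
    then have False using assms(2) by auto }
  then show "c \<noteq> 0" "b \<noteq> 0" by auto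
qed

lemma round_bound:
  fixes e c :: int assumes "c \<noteq> 0"
  shows "\<exists>m::int. \<bar>e - 2*m*c\<bar> \<le> \<bar>c\<bar>"
proof -
  define q where "q = real_of_int e / (2 * real_of_int c)"
  define m where "m = \<lfloor>q + 1/2\<rfloor>"
  have m1: "real_of_int m \<le> q + 1/2" "q + 1/2 < real_of_int m + 1"
    unfolding m_def by linarith+
  have qm: "\<bar>q - real_of_int m\<bar> \<le> 1/2" using m1 by linarith
  have "real_of_int e - 2 * real_of_int m * real_of_int c = 2 * real_of_int c * (q - real_of_int m)"
    unfolding q_def using assms by (simp add: field_simps)
  then have "\<bar>real_of_int e - 2 * real_of_int m * real_of_int c\<bar> = 2 * \<bar>real_of_int c\<bar> * \<bar>q - real_of_int m\<bar>"
    by (simp add: abs_mult)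
  also have "\<dots> \<le> 2 * \<bar>real_of_int c\<bar> * (1/2)"
    by (rule mult_left_mono[OF qm]) simp
  finally have "\<bar>real_of_int (e - 2*m*c)\<bar> \<le> real_of_int \<bar>c\<bar>" by simp
  then have "\<bar>e - 2*m*c\<bar> \<le> \<bar>c\<bar>" by linarith
  then show ?thesis by blast
qed

lemma descent:
  fixes a b c d :: int
  assumes "a*d - b*c = 1" "\<bar>a+d\<bar> > 2"
  shows "\<exists>k a' b' c' d'. dt k = 1 \<and> conj k (a,b,c,d) = (a',b',c',d') \<and> b'*c' > 0"
  using assms
proof (induction "nat \<bar>c\<bar>" arbitrary: a b c d rule: less_induct)
  case less
  have c0: "c \<noteq> 0" and b0: "b \<noteq> 0" using c_nz[OF less.prems] by auto
  show ?case
  proof (cases "b*c > 0")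
    case True
    then show ?thesis by (intro exI[of _ "(1,0,0,1)"]) (auto simp: conj_def)
  next
    case False
    have "b*c \<noteq> 0" using b0 c0 by simp
    then have bcn: "b*c < 0" using False by linarith
    obtain m where m: "\<bar>(d - a) - 2*m*c\<bar> \<le> \<bar>c\<bar>" using round_bound[OF c0] by blast
    define a1 where "a1 = a + m*c"
    define b1 where "b1 = b + m*(d-a) - m*m*c"
    define d1 where "d1 = d - m*c"
    have cR: "conj (1,m,0,1) (a,b,c,d) = (a1,b1,c,d1)" unfolding a1_def b1_def d1_def by (rule conj_R)
    have det1: "a1*d1 - b1*c = 1" using less.prems(1) unfolding a1_def b1_def d1_def by (simp add: algebra_simps)
    have tr1: "a1 + d1 = a + d" unfolding a1_def d1_def by simp
    have b10: "b1 \<noteq> 0" using c_nz[OF det1] tr1 less.prems(2) by auto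
    show ?thesis
    proof (cases "b1*c > 0")
      case True
      then show ?thesis using cR by (intro exI[of _ "(1,m,0,1)"]) auto
    next
      case False
      have "b1*c \<noteq> 0" using b10 c0 by simp
      then have bcn1: "b1*c < 0" using False by linarith
      have dd: "d1 - a1 = (d - a) - 2*m*c" unfolding a1_def d1_def by simp
      have "\<bar>d1 - a1\<bar> \<le> \<bar>c\<bar>" using m dd by simp
      then have sq: "(d1 - a1)^2 \<le> c^2" by (simp only: abs_le_square_iff)
      have disc: "(d1 - a1)^2 + 4*b1*c = (a1+d1)^2 - 4" using det1 by (simp add: power2_eq_square algebra_simps)
      have "(a1+d1)^2 = \<bar>a1+d1\<bar>^2" by simp
      moreover have "\<bar>a1+d1\<bar> \<ge> 3" using tr1 less.prems(2) by simp
      moreover have "\<bar>a1+d1\<bar> * \<bar>a1+d1\<bar> \<ge> 3 * 3"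
        using \<open>\<bar>a1+d1\<bar> \<ge> 3\<close> by (intro mult_mono) auto
      ultimately have "(a1+d1)^2 \<ge> 9" by (simp add: power2_eq_square)
      then have "4 * (- (b1 * c)) < c^2" using disc sq by linarith
      moreover have "- (b1*c) = \<bar>b1\<bar> * \<bar>c\<bar>"
      proof -
        have "\<bar>b1*c\<bar> = - (b1*c)" using bcn1 by linarith
        then show ?thesis by (simp only: abs_mult)
      qed
      moreover have "c^2 = \<bar>c\<bar> * \<bar>c\<bar>" by (simp add: power2_eq_square abs_mult_self_eq)
      ultimately have "(4 * \<bar>b1\<bar>) * \<bar>c\<bar> < \<bar>c\<bar> * \<bar>c\<bar>" by (simp only: mult.assoc)
      then have "4 * \<bar>b1\<bar> < \<bar>c\<bar>" by (rule mult_right_less_imp_less) simp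
      then have lt: "nat \<bar>-b1\<bar> < nat \<bar>c\<bar>" using c0 by simp
      have detS: "d1*a1 - (-c)*(-b1) = 1" using det1 by (simp add: algebra_simps)
      have trS: "\<bar>d1 + a1\<bar> > 2" using tr1 less.prems(2) by (simp add: add.commute)
      from less.hyps[OF lt detS trS] obtain k a' b' c' d' where
        k: "dt k = 1" "conj k (d1,-c,-b1,a1) = (a',b',c',d')" "b'*c' > 0" by blast
      have "conj (mm k (mm (0,-1,1,0) (1,m,0,1))) (a,b,c,d) = (a',b',c',d')"
      proof -
        have "conj (mm k (mm (0,-1,1,0) (1,m,0,1))) (a,b,c,d) = conj k (conj (0,-1,1,0) (conj (1,m,0,1) (a,b,c,d)))"
          using k(1) by (simp add: conj_conj dt_mm)
        also have "\<dots> = (a',b',c',d')" using cR conj_S k(2) by simp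
        finally show ?thesis .
      qed
      moreover have "dt (mm k (mm (0,-1,1,0) (1,m,0,1))) = 1" using k(1) by (simp add: dt_mm)
      ultimately show ?thesis using k(3) by blast
    qed
  qed
qed

definition xe :: "real\<times>real\<times>real\<times>real \<Rightarrow> real" where "xe N = (case N of (\<alpha>,\<beta>,\<gamma>,\<delta>) \<Rightarrow> \<alpha>/\<gamma>)"
definition ye :: "real\<times>real\<times>real\<times>real \<Rightarrow> real" where "ye N = (case N of (\<alpha>,\<beta>,\<gamma>,\<delta>) \<Rightarrow> \<beta>/\<delta>)"
lemma xe_simp[simp]: "xe (\<alpha>,\<beta>,\<gamma>,\<delta>) = \<alpha>/\<gamma>" by (simp add: xe_def)
lemma ye_simp[simp]: "ye (\<alpha>,\<beta>,\<gamma>,\<delta>) = \<beta>/\<delta>" by (simp add: ye_def)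

definition pos :: "int\<times>int\<times>int\<times>int \<Rightarrow> bool" where "pos P = (case P of (a,b,c,d) \<Rightarrow> a>0 \<and> b>0 \<and> c>0 \<and> d>0)"
lemma pos_simp[simp]: "pos (a,b,c,d) \<longleftrightarrow> a>0 \<and> b>0 \<and> c>0 \<and> d>0" by (simp add: pos_def)

lemma red_trans:
  assumes "\<exists>k1. dt k1 = 1 \<and> Q1 (conj k1 P) (mm (of_int_mat k1) N)"
    and "\<And>P' N'. Q1 P' N' \<Longrightarrow> \<exists>k2. dt k2 = 1 \<and> Q2 (conj k2 P') (mm (of_int_mat k2) N')"
  shows "\<exists>k. dt k = 1 \<and> Q2 (conj k P) (mm (of_int_mat k) N)"
proof -
  obtain k1 where k1: "dt k1 = 1" "Q1 (conj k1 P) (mm (of_int_mat k1) N)" using assms(1) by blast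
  obtain k2 where k2: "dt k2 = 1" "Q2 (conj k2 (conj k1 P)) (mm (of_int_mat k2) (mm (of_int_mat k1) N))"
    using assms(2)[OF k1(2)] by blast
  have "conj k2 (conj k1 P) = conj (mm k2 k1) P" using k1(1) k2(1) by (rule conj_conj)
  moreover have "mm (of_int_mat k2) (mm (of_int_mat k1) N) = mm (of_int_mat (mm k2 k1)) N"
    by (simp add: of_int_mat_mm mm_assoc)
  ultimately show ?thesis using k1(1) k2 by (intro exI[of _ "mm k2 k1"]) (auto simp: dt_mm)
qed

lemma Inv_tr: assumes "Inv (a,b,c,d) N l" shows "a + d > 2" "a*d - b*c = 1"
proof -
  obtain \<alpha> \<beta> \<gamma> \<delta> where N: "N = (\<alpha>,\<beta>,\<gamma>,\<delta>)" by (cases N) auto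
  have "real_of_int a + real_of_int d = l + 1/l" "l > 1"
    using Inv_facts[OF assms[unfolded N] refl refl] by auto
  moreover have "l + 1/l > 2" using \<open>l > 1\<close>
  proof -
    have "(l - 1)^2 > 0" using \<open>l>1\<close> by simp
    then have "l*l + 1 > 2*l" by (simp add: power2_eq_square algebra_simps)
    then show ?thesis using \<open>l>1\<close> by (simp add: field_simps)
  qed
  ultimately have "real_of_int (a + d) > 2" by simp
  then show "a + d > 2" by linarith
  show "a*d - b*c = 1" using assms by (simp add: Inv_def)
qed

lemma S1: assumes "Inv P N l"
  shows "\<exists>k. dt k = 1 \<and> (\<lambda>P' N'. Inv P' N' l \<and> (case P' of (a,b,c,d) \<Rightarrow> b*c > 0)) (conj k P) (mm (of_int_mat k) N)"
proof -
  obtain a b c d where P: "P = (a,b,c,d)" by (cases P) auto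
  have t: "a + d > 2" "a*d - b*c = 1" using Inv_tr assms P by auto
  then have "\<bar>a + d\<bar> > 2" by simp
  from descent[OF t(2) this] obtain k a' b' c' d' where
    k: "dt k = 1" "conj k (a,b,c,d) = (a',b',c',d')" "b'*c' > 0" by blast
  have "Inv (conj k P) (mm (of_int_mat k) N) l" using Inv_conj[OF assms k(1)] .
  then show ?thesis using k P by (intro exI[of _ k]) auto
qed

lemma S2: assumes "Inv P N l" "case P of (a,b,c,d) \<Rightarrow> b*c > 0"
  shows "\<exists>k. dt k = 1 \<and> (\<lambda>P' N'. Inv P' N' l \<and> pos P') (conj k P) (mm (of_int_mat k) N)"
proof -
  obtain a b c d where P: "P = (a,b,c,d)" by (cases P) auto
  have t: "a + d > 2" "a*d - b*c = 1" using Inv_tr assms P by auto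
  have bc: "b*c > 0" using assms(2) P by simp
  have ad: "a*d > 1" using t bc by linarith
  have a0: "a > 0"
  proof (rule ccontr)
    assume "\<not> a > 0"
    then have "a \<le> 0" "d \<ge> 3" using t by linarith+
    then have "a*d \<le> 0" by (simp add: mult_nonpos_nonneg)
    then show False using ad by simp
  qed
  have d0: "d > 0"
  proof (rule ccontr)
    assume "\<not> d > 0"
    then have "d \<le> 0" "a \<ge> 3" using t by linarith+
    then have "a*d \<le> 0" by (simp add: mult_nonneg_nonpos)
    then show False using ad by simp
  qed
  show ?thesis
  proof (cases "c > 0")
    case True
    then have "b > 0" using bc by (simp add: zero_less_mult_iff)
    then show ?thesis using assms(1) P a0 d0 True
      by (intro exI[of _ "(1,0,0,1)"]) (simp add: conj_def)
  next
    case False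
    then have "c < 0" "b < 0" using bc by (auto simp: zero_less_mult_iff)
    moreover have "Inv (conj (0,-1,1,0) P) (mm (of_int_mat (0,-1,1,0)) N) l"
      by (rule Inv_conj[OF assms(1)]) simp
    ultimately show ?thesis using P a0 d0 conj_S
      by (intro exI[of _ "(0,-1,1,0)"]) simp
  qed
qed

lemma comparable:
  fixes a b c d :: int
  assumes "a \<ge> 0" "b \<ge> 0" "c \<ge> 0" "d \<ge> 0" "a*d - b*c = 1" "\<not> (a = 1 \<and> b = 0 \<and> c = 0 \<and> d = 1)"
  shows "(a \<ge> c \<and> b \<ge> d) \<or> (c \<ge> a \<and> d \<ge> b)"
proof (rule ccontr)
  assume H: "\<not> ?thesis"
  then consider "a < c" "d < b" | "c < a" "b < d" by linarith
  then show False
  proof cases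
    case 1
    then have "b*c \<ge> (d+1)*(a+1)" using assms by (intro mult_mono) auto
    then show False using assms(5) assms(1,4) by (simp add: algebra_simps)
  next
    case 2
    then have "a*d \<ge> (c+1)*(b+1)" using assms by (intro mult_mono) auto
    then have "a*d \<ge> b*c + b + c + 1" by (simp add: algebra_simps)
    then have "b = 0" "c = 0" using assms by auto
    then have "a*d = 1" using assms(5) by simp
    then have "a = 1" "d = 1" using assms(1,4) zmult_eq_1_iff by auto
    then show False using assms(6) \<open>b=0\<close> \<open>c=0\<close> by simp
  qed
qed

lemma Pos_from_ends:
  assumes I: "Inv (a,b,c,d) (\<alpha>,\<beta>,\<gamma>,\<delta>) l" and x: "\<alpha>/\<gamma> > 0" and y: "\<beta>/\<delta> < 0"
  shows "pos (a,b,c,d)"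
proof -
  note f = Inv_facts[OF I refl refl]
  let ?x = "\<alpha>/\<gamma>" and ?y = "\<beta>/\<delta>"
  have l1: "l > 1" using f by simp
  have "l - 1/l > 0" using l1 by (simp add: field_simps) (metis less_1_mult mult.commute less_trans zero_less_one)
  moreover have "real_of_int c * (?x - ?y) = l - 1/l" using f(4,5) by (simp add: algebra_simps)
  ultimately have "real_of_int c * (?x - ?y) > 0" by simp
  moreover have "?x - ?y > 0" using x y by simp
  ultimately have cr: "real_of_int c > 0" by (simp add: zero_less_mult_iff)
  then have c0: "c > 0" by simp
  have "?x * ?y < 0" using mult_pos_neg[OF x y] .
  then have "real_of_int c * (?x * ?y) < 0" using mult_pos_neg[OF cr] by blast
  then have "- real_of_int b < 0" using f(10) by (simp add: mult.assoc)
  then have b0: "b > 0" by simp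
  have t: "a + d > 2" "a*d - b*c = 1" using Inv_tr[OF I] by auto
  have ad: "a*d > 1" using t b0 c0 by (smt (verit) mult_pos_pos)
  have "a > 0"
  proof (rule ccontr)
    assume "\<not> a > 0"
    then have "a \<le> 0" "d \<ge> 3" using t by linarith+
    then have "a*d \<le> 0" by (simp add: mult_nonpos_nonneg)
    then show False using ad by simp
  qed
  moreover have "d > 0"
  proof (rule ccontr)
    assume "\<not> d > 0"
    then have "d \<le> 0" "a \<ge> 3" using t by linarith+
    then have "a*d \<le> 0" by (simp add: mult_nonneg_nonpos)
    then show False using ad by simp
  qed
  ultimately show ?thesis using b0 c0 by simp
qed

lemma S3: assumes I: "Inv P N l" and p: "pos P"
  shows "\<exists>k. dt k = 1 \<and> (\<lambda>P' N'. Inv P' N' l \<and> pos P' \<and> 0 < xe N' \<and> xe N' < 1 \<and> ye N' < 0 \<and>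
            (case P' of (a,b,c,d) \<Rightarrow> c \<ge> a \<and> d \<ge> b)) (conj k P) (mm (of_int_mat k) N)"
proof -
  obtain a b c d where P: "P = (a,b,c,d)" by (cases P) auto
  obtain \<alpha> \<beta> \<gamma> \<delta> where N: "N = (\<alpha>,\<beta>,\<gamma>,\<delta>)" by (cases N) auto
  define x where "x = \<alpha>/\<gamma>"
  define y where "y = \<beta>/\<delta>"
  note f = Inv_facts[OF I[unfolded P N] x_def y_def]
  have c0: "c > 0" "b > 0" using p P by auto
  have l1: "l > 1" using f by simp
  have "1/l < l" using l1 by (smt (verit) divide_less_eq_1_pos less_trans)
  then have "real_of_int c * y < real_of_int c * x" using f(4,5) by linarith
  then have xy: "y < x" using c0 by simp
  have "real_of_int c * x * y < 0" using f(10) c0 by simp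
  then have "x * y < 0" using c0 by (simp add: mult.assoc zero_less_mult_iff mult_less_0_iff)
  then have x0: "x > 0" and y0: "y < 0" using xy by (auto simp: mult_less_0_iff)
  define n where "n = \<lceil>x\<rceil> - 1"
  have n0: "n \<ge> 0" using x0 unfolding n_def by (simp add: ceiling_le_zero)
  have xn: "0 < x - n" "x - n \<le> 1" unfolding n_def by (simp; linarith)+
  let ?k = "(1,-n,0,1) :: int\<times>int\<times>int\<times>int"
  have dk: "dt ?k = 1" by simp
  have I2: "Inv (conj ?k P) (mm (of_int_mat ?k) N) l" by (rule Inv_conj[OF I dk])
  obtain a' b' c' d' where P': "conj ?k P = (a',b',c',d')" by (cases "conj ?k P") auto
  have N': "mm (of_int_mat ?k) N = (\<alpha> - n*\<gamma>, \<beta> - n*\<delta>, \<gamma>, \<delta>)" unfolding N by simp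
  have g0: "\<gamma> \<noteq> 0" and d0: "\<delta> \<noteq> 0" using f by auto
  have x': "xe (mm (of_int_mat ?k) N) = x - n" unfolding N' x_def using g0 by (simp add: field_simps)
  have y': "ye (mm (of_int_mat ?k) N) = y - n" unfolding N' y_def using d0 by (simp add: field_simps)
  have I3: "Inv (a',b',c',d') (\<alpha> - n*\<gamma>, \<beta> - n*\<delta>, \<gamma>, \<delta>) l" using I2 P' N' by simp
  have yn: "y - n < 0" using y0 n0 by simp
  have pos': "pos (a',b',c',d')"
    by (rule Pos_from_ends[OF I3]) (use x' y' N' xn yn in auto)
  define x1 where "x1 = (\<alpha> - n*\<gamma>)/\<gamma>"
  have x1: "x1 = x - n" using x' N' x1_def by simp
  note f2 = Inv_facts[OF I3 x1_def refl]
  have dt': "a'*d' - b'*c' = 1" using I3 by (simp add: Inv_def)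
  have notI: "\<not> (a' = 1 \<and> b' = 0 \<and> c' = 0 \<and> d' = 1)" using pos' by auto
  have cmp: "(a' \<ge> c' \<and> b' \<ge> d') \<or> (c' \<ge> a' \<and> d' \<ge> b')"
    by (rule comparable) (use pos' dt' notI in auto)
  have e1: "real_of_int a' * x1 + real_of_int b' = l * x1" "real_of_int c' * x1 + real_of_int d' = l"
    using f2 by auto
  have x1le: "x1 \<le> 1" "x1 > 0" using x1 xn by auto
  have case2: "c' \<ge> a' \<and> d' \<ge> b'"
  proof (rule ccontr)
    assume nc: "\<not> (c' \<ge> a' \<and> d' \<ge> b')"
    then have ge: "a' \<ge> c'" "b' \<ge> d'" using cmp by auto
    have "real_of_int (a' - c') * x1 + real_of_int (b' - d') \<ge> 0"
      using ge x1le by (simp add: add_nonneg_nonneg)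
    then have "l * x1 \<ge> l" using e1 by (simp add: algebra_simps)
    then have "x1 \<ge> 1" using l1 by simp
    then have "x1 = 1" using x1le by simp
    then have "a' + b' = c' + d'" using e1 by simp
    then have "a' = c'" "b' = d'" using ge by auto
    then show False using dt' by (simp add: mult.commute)
  qed
  have x1ne: "x1 \<noteq> 1"
  proof
    assume "x1 = 1"
    then have "a' + b' = c' + d'" using e1 by simp
    then have "a' = c'" "b' = d'" using case2 by auto
    then show False using dt' by (simp add: mult.commute)
  qed
  show ?thesis
    using I2 P' pos' x' y' x1 x1le x1ne xn yn case2
    by (intro exI[of _ ?k]) auto
qed

definition Dig :: "(int \<times> int) set" where "Dig = {(2,-1),(1,1)}"

definition dm :: "int\<times>int \<Rightarrow> int\<times>int\<times>int\<times>int" where "dm x = (fst x, snd x, 1, 0)"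
definition dm' :: "int\<times>int \<Rightarrow> int\<times>int\<times>int\<times>int" where
  "dm' x = (if x = (2,-1) then (1,0,1,1) else (0,1,1,1))"

fun dmat :: "(int\<times>int) list \<Rightarrow> int\<times>int\<times>int\<times>int" where
  "dmat [] = (1,0,0,1)" | "dmat (x#xs) = mm (dm x) (dmat xs)"
fun dmat' :: "(int\<times>int) list \<Rightarrow> int\<times>int\<times>int\<times>int" where
  "dmat' [] = (1,0,0,1)" | "dmat' (x#xs) = mm (dm' x) (dmat' xs)"

fun dfun :: "(int\<times>int) list \<Rightarrow> real \<Rightarrow> real" where
  "dfun [] v = v" | "dfun (x#xs) v = of_int (fst x) + of_int (snd x) / dfun xs v"
fun efun :: "(int\<times>int) list \<Rightarrow> real \<Rightarrow> real" where
  "efun [] u = u" | "efun (x#xs) u = of_int (snd x) / (of_int (fst x) + efun xs u)"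

lemma Dig_cases: "x \<in> Dig \<Longrightarrow> x = (2,-1) \<or> x = (1,1)" by (auto simp: Dig_def)

lemma dm_conj: "x \<in> Dig \<Longrightarrow> mm (1,1,0,1) (dm' x) = mm (dm x) (1,1,0,1)"
  by (auto simp: Dig_def dm_def dm'_def)

lemma dmat_conj: "set ds \<subseteq> Dig \<Longrightarrow> mm (1,1,0,1) (dmat' ds) = mm (dmat ds) (1,1,0,1)"
proof (induction ds)
  case (Cons x xs)
  then have x: "x \<in> Dig" and xs: "set xs \<subseteq> Dig" by auto
  have "mm (1,1,0,1) (dmat' (x#xs)) = mm (mm (1,1,0,1) (dm' x)) (dmat' xs)" by (simp add: mm_assoc)
  also have "\<dots> = mm (dm x) (mm (1,1,0,1) (dmat' xs))" using dm_conj[OF x] by (simp add: mm_assoc)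
  also have "\<dots> = mm (dmat (x#xs)) (1,1,0,1)" using Cons.IH[OF xs] by (simp add: mm_assoc)
  finally show ?case .
qed simp

lemma dmat_conjR: assumes "set ds \<subseteq> Dig" shows "dmat ds = conj (1,1,0,1) (dmat' ds)"
proof -
  have "conj (1,1,0,1) (dmat' ds) = mm (mm (dmat ds) (1,1,0,1)) (iv (1,1,0,1))"
    unfolding conj_def using dmat_conj[OF assms] by simp
  also have "\<dots> = dmat ds" by (simp add: mm_assoc)
  finally show ?thesis by simp
qed

lemma dt_dmat: "dt (dmat ds) = (\<Prod>i<length ds. - snd (ds ! i))"
proof (induction ds)
  case (Cons x xs)
  have "dt (dmat (x#xs)) = (- snd x) * dt (dmat xs)" by (simp add: dt_mm dm_def)
  also have "\<dots> = (\<Prod>i<length (x#xs). - snd ((x#xs) ! i))"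
    using Cons.IH by (simp only: length_Cons prod.lessThan_Suc_shift nth_Cons_0 nth_Cons_Suc)
  finally show ?case .
qed simp

lemma dmat_pos: "set ds \<subseteq> Dig \<Longrightarrow> ds \<noteq> [] \<Longrightarrow> dmat ds = (p,q,s,t) \<Longrightarrow> p \<ge> s \<and> s \<ge> 1"
proof (induction ds arbitrary: p q s t)
  case (Cons x xs)
  then have x: "x \<in> Dig" and xs: "set xs \<subseteq> Dig" by auto
  show ?case
  proof (cases "xs = []")
    case True
    then show ?thesis using Cons.prems x by (auto simp: Dig_def dm_def)
  next
    case False
    obtain p1 q1 s1 t1 where m: "dmat xs = (p1,q1,s1,t1)" by (cases "dmat xs") auto
    have ih: "p1 \<ge> s1" "s1 \<ge> 1" using Cons.IH[OF xs False m] by auto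
    have "dmat (x#xs) = (fst x * p1 + snd x * s1, fst x * q1 + snd x * t1, p1, q1)"
      using m by (simp add: dm_def)
    then show ?thesis using Cons.prems(3) x ih by (auto simp: Dig_def)
  qed
qed simp

lemma dfun_ge1: "set ds \<subseteq> Dig \<Longrightarrow> v \<ge> 1 \<Longrightarrow> dfun ds v \<ge> 1"
proof (induction ds)
  case (Cons x xs)
  then have x: "x \<in> Dig" and h: "dfun xs v \<ge> 1" by auto
  then show ?case using x by (auto simp: Dig_def divide_simps)
qed simp

lemma dfun_mat: "set ds \<subseteq> Dig \<Longrightarrow> v \<ge> 1 \<Longrightarrow> dmat ds = (p,q,s,t) \<Longrightarrow>
   of_int s * v + of_int t > 0 \<and> dfun ds v = (of_int p * v + of_int q) / (of_int s * v + of_int t)"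
proof (induction ds arbitrary: p q s t)
  case Nil then show ?case by simp
next
  case (Cons x xs)
  then have x: "x \<in> Dig" and xs: "set xs \<subseteq> Dig" by auto
  obtain p1 q1 s1 t1 where m: "dmat xs = (p1,q1,s1,t1)" by (cases "dmat xs") auto
  have ih: "of_int s1 * v + of_int t1 > 0" "dfun xs v = (of_int p1 * v + of_int q1) / (of_int s1 * v + of_int t1)"
    using Cons.IH[OF xs Cons.prems(2) m] by auto
  have ge: "dfun xs v \<ge> 1" using dfun_ge1[OF xs Cons.prems(2)] .
  have pq: "of_int p1 * v + of_int q1 > 0"
  proof -
    have "(of_int p1 * v + of_int q1) / (of_int s1 * v + of_int t1) > 0" using ge ih(2) by simp
    then show ?thesis using ih(1) by (simp add: zero_less_divide_iff)
  qed
  have dm: "dmat (x#xs) = (fst x * p1 + snd x * s1, fst x * q1 + snd x * t1, p1, q1)"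
    using m by (simp add: dm_def)
  then have pqst: "p = fst x * p1 + snd x * s1" "q = fst x * q1 + snd x * t1" "s = p1" "t = q1"
    using Cons.prems(3) by auto
  have "dfun (x#xs) v = of_int (fst x) + of_int (snd x) * (of_int s1 * v + of_int t1) / (of_int p1 * v + of_int q1)"
    using ih(2) by simp
  also have "\<dots> = (of_int p * v + of_int q) / (of_int s * v + of_int t)"
    using pq unfolding pqst by (simp add: field_simps)
  finally show ?case using pq pqst by simp
qed

lemma efun_gt: "set ds \<subseteq> Dig \<Longrightarrow> u > -1 \<Longrightarrow> efun ds u > -1"
proof (induction ds)
  case (Cons x xs)
  then have x: "x \<in> Dig" and h: "efun xs u > -1" by auto
  then show ?case using x by (auto simp: Dig_def divide_simps)
qed simp

lemma efun_append: "efun (xs @ ys) u = efun xs (efun ys u)"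
  by (induction xs) auto

lemma efun_mat: "set ds \<subseteq> Dig \<Longrightarrow> u > -1 \<Longrightarrow> dmat ds = (p,q,s,t) \<Longrightarrow>
   of_int s * u + of_int p > 0 \<and> efun (rev ds) u = (of_int t * u + of_int q) / (of_int s * u + of_int p)"
proof (induction ds arbitrary: p q s t u)
  case Nil then show ?case by simp
next
  case (Cons x xs)
  then have x: "x \<in> Dig" and xs: "set xs \<subseteq> Dig" by auto
  obtain p1 q1 s1 t1 where m: "dmat xs = (p1,q1,s1,t1)" by (cases "dmat xs") auto
  define E where "E = of_int (snd x) / (of_int (fst x) + u)"
  have au: "of_int (fst x) + u > 0" using x Cons.prems(2) by (auto simp: Dig_def)
  have E1: "E > -1" using x Cons.prems(2) unfolding E_def by (auto simp: Dig_def divide_simps)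
  have ih: "of_int s1 * E + of_int p1 > 0" "efun (rev xs) E = (of_int t1 * E + of_int q1) / (of_int s1 * E + of_int p1)"
    using Cons.IH[OF xs E1 m] by auto
  have dm: "dmat (x#xs) = (fst x * p1 + snd x * s1, fst x * q1 + snd x * t1, p1, q1)"
    using m by (simp add: dm_def)
  then have pqst: "p = fst x * p1 + snd x * s1" "q = fst x * q1 + snd x * t1" "s = p1" "t = q1"
    using Cons.prems(3) by auto
  have den: "of_int s1 * E + of_int p1 = (of_int p1 * (of_int (fst x) + u) + of_int s1 * of_int (snd x)) / (of_int (fst x) + u)"
    unfolding E_def using au by (simp add: field_simps)
  have num: "of_int t1 * E + of_int q1 = (of_int q1 * (of_int (fst x) + u) + of_int t1 * of_int (snd x)) / (of_int (fst x) + u)"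
    unfolding E_def using au by (simp add: field_simps)
  have dpos: "of_int p1 * (of_int (fst x) + u) + of_int s1 * of_int (snd x) > 0"
    using ih(1) au unfolding den by (simp add: zero_less_divide_iff)
  have "efun (rev (x#xs)) u = efun (rev xs) E" by (simp add: efun_append E_def)
  also have "\<dots> = (of_int q1 * (of_int (fst x) + u) + of_int t1 * of_int (snd x)) / (of_int p1 * (of_int (fst x) + u) + of_int s1 * of_int (snd x))"
    using ih(2) au unfolding den num by simp
  also have "\<dots> = (of_int t * u + of_int q) / (of_int s * u + of_int p)"
    unfolding pqst by (simp add: algebra_simps)
  finally show ?case using dpos unfolding pqst by (simp add: algebra_simps)
qed

lemma aux_ge1: "(h::real) \<ge> 1 \<Longrightarrow> 1 \<le> 2 + (-1)/h \<and> 1 \<le> 1 + 1/h"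
proof -
  assume h: "h \<ge> 1"
  then have "1/h \<le> 1" "1/h \<ge> 0" by auto
  then show ?thesis by simp
qed

lemma aux_gt: "(u::real) > -1 \<Longrightarrow> -1 < (-1)/(2+u) \<and> -1 < 1/(1+u)"
proof -
  assume u: "u > -1"
  then have p: "2+u > 1" "1+u > 0" by auto
  then have "1/(2+u) < 1" by (simp add: divide_less_eq)
  moreover have "0 < 1/(1+u)" using p by simp
  moreover have "(-1)/(2+u) = -(1/(2+u))" by simp
  ultimately show ?thesis by linarith
qed

lemma lconv_ge1: "(\<And>i. d i \<in> Dig) \<Longrightarrow> lconv d n \<ge> 1"
proof (induction n arbitrary: d)
  case 0
  have "d 0 = (2,-1) \<or> d 0 = (1,1)" using Dig_cases[OF "0.prems"[of 0]] .
  then show ?case by auto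
next
  case (Suc n)
  have pr: "\<And>i. d (Suc i) \<in> Dig" using Suc.prems .
  have h: "lconv (\<lambda>i. d (Suc i)) n \<ge> 1" using Suc.IH[OF pr] .
  note a = aux_ge1[OF h]
  have "d 0 = (2,-1) \<or> d 0 = (1,1)" using Dig_cases[OF Suc.prems[of 0]] .
  then show ?case using a by auto
qed

lemma fconv_gt: "(\<And>i. (snd (e i), fst (e i)) \<in> Dig) \<Longrightarrow> fconv e n > -1"
proof (induction n arbitrary: e)
  case 0
  have "(snd (e 0), fst (e 0)) = (2,-1) \<or> (snd (e 0), fst (e 0)) = (1,1)" using Dig_cases[OF "0.prems"[of 0]] .
  then show ?case by auto
next
  case (Suc n)
  have pr: "\<And>i. (snd (e (Suc i)), fst (e (Suc i))) \<in> Dig" using Suc.prems .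
  have h: "fconv (\<lambda>i. e (Suc i)) n > -1" using Suc.IH[OF pr] .
  note a = aux_gt[OF h]
  have "(snd (e 0), fst (e 0)) = (2,-1) \<or> (snd (e 0), fst (e 0)) = (1,1)" using Dig_cases[OF Suc.prems[of 0]] .
  then show ?case using a by (auto simp: add.commute)
qed

lemma lconv_shift: "(\<And>i. i < length xs \<Longrightarrow> d i = xs ! i) \<Longrightarrow>
    lconv d (n + length xs) = dfun xs (lconv (\<lambda>i. d (i + length xs)) n)"
proof (induction xs arbitrary: d)
  case Nil then show ?case by simp
next
  case (Cons x xs)
  have ih: "lconv (\<lambda>i. d (Suc i)) (n + length xs) = dfun xs (lconv (\<lambda>i. d (Suc (i + length xs))) n)"
    using Cons.IH[of "\<lambda>i. d (Suc i)"] Cons.prems by fastforce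
  have d0: "d 0 = x" using Cons.prems[of 0] by simp
  show ?case using ih d0 by simp
qed

lemma fconv_shift: "(\<And>i. i < length xs \<Longrightarrow> e i = (snd (xs ! i), fst (xs ! i))) \<Longrightarrow>
    fconv e (n + length xs) = efun xs (fconv (\<lambda>i. e (i + length xs)) n)"
proof (induction xs arbitrary: e)
  case Nil then show ?case by simp
next
  case (Cons x xs)
  have ih: "fconv (\<lambda>i. e (Suc i)) (n + length xs) = efun xs (fconv (\<lambda>i. e (Suc (i + length xs))) n)"
    using Cons.IH[of "\<lambda>i. e (Suc i)"] Cons.prems by fastforce
  have d0: "e 0 = (snd x, fst x)" using Cons.prems[of 0] by simp
  show ?case using ih d0 by simp
qed

lemma word_exists:
  fixes a b c d :: int
  assumes "a \<ge> 0" "b \<ge> 0" "c \<ge> a" "d \<ge> b" "a*d - b*c = 1 \<or> a*d - b*c = -1"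
  shows "\<exists>ds. ds \<noteq> [] \<and> set ds \<subseteq> Dig \<and> dmat' ds = (a,b,c,d)"
  using assms
proof (induction "nat (a+b+c+d)" arbitrary: a b c d rule: less_induct)
  case less
  define c0 where "c0 = c - a"
  define d0 where "d0 = d - b"
  have c0p: "c0 \<ge> 0" "d0 \<ge> 0" using less.prems unfolding c0_def d0_def by auto
  have det0: "a*d0 - b*c0 = a*d - b*c" unfolding c0_def d0_def by (simp add: algebra_simps)
  have ab: "a + b > 0"
  proof (rule ccontr)
    assume "\<not> a + b > 0"
    then have "a = 0" "b = 0" using less.prems by auto
    then show False using less.prems(5) by simp
  qed
  have lt1: "nat (a+b+c0+d0) < nat (a+b+c+d)" unfolding c0_def d0_def using ab less.prems by simp
  have lt2: "nat (c0+d0+a+b) < nat (a+b+c+d)" unfolding c0_def d0_def using ab less.prems by simp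
  have B: "mm (dm' (2,-1)) (a,b,c0,d0) = (a,b,c,d)" unfolding c0_def d0_def dm'_def by simp
  have A: "mm (dm' (1,1)) (c0,d0,a,b) = (a,b,c,d)" unfolding c0_def d0_def dm'_def by simp
  have dig: "(2,-1) \<in> Dig" "(1,1) \<in> Dig" by (auto simp: Dig_def)
  have recB: "\<exists>ds. ds \<noteq> [] \<and> set ds \<subseteq> Dig \<and> dmat' ds = (a,b,c,d)"
    if "c0 \<ge> a" "d0 \<ge> b" for dummy :: bool
  proof -
    from less.hyps[OF lt1 less.prems(1,2) that] less.prems(5) det0
    obtain ds where ds: "ds \<noteq> []" "set ds \<subseteq> Dig" "dmat' ds = (a,b,c0,d0)" by auto
    then show ?thesis using B dig by (intro exI[of _ "(2,-1)#ds"]) auto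
  qed
  have recA: "\<exists>ds. ds \<noteq> [] \<and> set ds \<subseteq> Dig \<and> dmat' ds = (a,b,c,d)"
    if "a \<ge> c0" "b \<ge> d0" for dummy :: bool
  proof -
    have "c0*b - d0*a = -(a*d0 - b*c0)" by (simp add: algebra_simps)
    then have "c0*b - d0*a = 1 \<or> c0*b - d0*a = -1" using less.prems(5) det0 by auto
    from less.hyps[OF lt2 c0p that this]
    obtain ds where ds: "ds \<noteq> []" "set ds \<subseteq> Dig" "dmat' ds = (c0,d0,a,b)" by auto
    then show ?thesis using A dig by (intro exI[of _ "(1,1)#ds"]) auto
  qed
  show ?case
  proof (cases "a*d - b*c = 1")
    case True
    show ?thesis
    proof (cases "a = 1 \<and> b = 0 \<and> c0 = 0 \<and> d0 = 1")
      case True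
      then have "(a,b,c,d) = (1,0,1,1)" unfolding c0_def d0_def by auto
      then show ?thesis using dig by (intro exI[of _ "[(2,-1)]"]) (auto simp: dm'_def)
    next
      case False
      have "(a \<ge> c0 \<and> b \<ge> d0) \<or> (c0 \<ge> a \<and> d0 \<ge> b)"
        by (rule comparable) (use less.prems c0p det0 \<open>a*d - b*c = 1\<close> False in auto)
      then show ?thesis using recA recB by blast
    qed
  next
    case False
    then have dm1: "c0*b - d0*a = 1" using less.prems(5) det0 by (simp add: algebra_simps)
    show ?thesis
    proof (cases "c0 = 1 \<and> d0 = 0 \<and> a = 0 \<and> b = 1")
      case True
      then have "(a,b,c,d) = (0,1,1,1)" unfolding c0_def d0_def by auto
      then show ?thesis using dig by (intro exI[of _ "[(1,1)]"]) (auto simp: dm'_def)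
    next
      case False
      have "(c0 \<ge> a \<and> d0 \<ge> b) \<or> (a \<ge> c0 \<and> b \<ge> d0)"
        by (rule comparable) (use less.prems c0p dm1 False in auto)
      then show ?thesis using recA recB by blast
    qed
  qed
qed

lemma reduce_word:
  assumes I: "Inv P N l"
  shows "\<exists>k ds. dt k = 1 \<and> ds \<noteq> [] \<and> set ds \<subseteq> Dig \<and> Inv (dmat ds) (mm (of_int_mat k) N) l \<and>
     1 < xe (mm (of_int_mat k) N) \<and> xe (mm (of_int_mat k) N) < 2 \<and> ye (mm (of_int_mat k) N) < 1"
proof -
  have st1: "\<exists>k. dt k = 1 \<and> (\<lambda>P' N'. Inv P' N' l \<and> pos P') (conj k P) (mm (of_int_mat k) N)"
  proof (rule red_trans[OF S1[OF I]])
    fix P' N' assume "Inv P' N' l \<and> (case P' of (a,b,c,d) \<Rightarrow> b*c > 0)"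
    then show "\<exists>k2. dt k2 = 1 \<and> Inv (conj k2 P') (mm (of_int_mat k2) N') l \<and> pos (conj k2 P')"
      using S2[of P' N' l] by simp
  qed
  have "\<exists>k. dt k = 1 \<and> (\<lambda>P' N'. Inv P' N' l \<and> pos P' \<and> 0 < xe N' \<and> xe N' < 1 \<and> ye N' < 0 \<and>
            (case P' of (a,b,c,d) \<Rightarrow> c \<ge> a \<and> d \<ge> b)) (conj k P) (mm (of_int_mat k) N)"
  proof (rule red_trans[OF st1])
    fix P' N' assume "Inv P' N' l \<and> pos P'"
    then show "\<exists>k2. dt k2 = 1 \<and> (\<lambda>P' N'. Inv P' N' l \<and> pos P' \<and> 0 < xe N' \<and> xe N' < 1 \<and> ye N' < 0 \<and>
            (case P' of (a,b,c,d) \<Rightarrow> c \<ge> a \<and> d \<ge> b)) (conj k2 P') (mm (of_int_mat k2) N')"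
      using S3[of P' N' l] by simp
  qed
  then obtain k where kk: "dt k = 1 \<and> (\<lambda>P' N'. Inv P' N' l \<and> pos P' \<and> 0 < xe N' \<and> xe N' < 1 \<and> ye N' < 0 \<and>
            (case P' of (a,b,c,d) \<Rightarrow> c \<ge> a \<and> d \<ge> b)) (conj k P) (mm (of_int_mat k) N)" ..
  have k: "dt k = 1" using kk by (rule conjunct1)
  from kk have Hk: "(\<lambda>P' N'. Inv P' N' l \<and> pos P' \<and> 0 < xe N' \<and> xe N' < 1 \<and> ye N' < 0 \<and>
            (case P' of (a,b,c,d) \<Rightarrow> c \<ge> a \<and> d \<ge> b)) (conj k P) (mm (of_int_mat k) N)" by (rule conjunct2)
  then have Hk': "Inv (conj k P) (mm (of_int_mat k) N) l \<and> pos (conj k P) \<and> 0 < xe (mm (of_int_mat k) N) \<and>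
     xe (mm (of_int_mat k) N) < 1 \<and> ye (mm (of_int_mat k) N) < 0 \<and>
     (case conj k P of (a,b,c,d) \<Rightarrow> c \<ge> a \<and> d \<ge> b)" by (simp only:)
  have I3: "Inv (conj k P) (mm (of_int_mat k) N) l" using Hk' by (rule conjunct1)
  have p3: "pos (conj k P)" using Hk' by (simp only:)
  have x3: "0 < xe (mm (of_int_mat k) N)" "xe (mm (of_int_mat k) N) < 1" using Hk' by (simp only:)+
  have y3: "ye (mm (of_int_mat k) N) < 0" using Hk' by (simp only:)
  have cmp: "case conj k P of (a,b,c,d) \<Rightarrow> c \<ge> a \<and> d \<ge> b" using Hk' by (simp only:)
  obtain a b c d where P3: "conj k P = (a,b,c,d)" by (cases "conj k P") auto
  obtain \<alpha> \<beta> \<gamma> \<delta> where N3: "mm (of_int_mat k) N = (\<alpha>,\<beta>,\<gamma>,\<delta>)" by (cases "mm (of_int_mat k) N") auto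
  have det: "a*d - b*c = 1" using I3 P3 by (simp add: Inv_def)
  obtain ds where ds: "ds \<noteq> []" "set ds \<subseteq> Dig" "dmat' ds = (a,b,c,d)"
    using word_exists[of a b c d] p3 cmp det P3 by auto
  have W: "dmat ds = conj (1,1,0,1) (a,b,c,d)" using dmat_conjR[OF ds(2)] ds(3) by simp
  let ?R = "(1,1,0,1) :: int\<times>int\<times>int\<times>int"
  have I4: "Inv (dmat ds) (mm (of_int_mat ?R) (mm (of_int_mat k) N)) l"
    using Inv_conj[OF I3, of ?R] W P3 by simp
  have N4: "mm (of_int_mat ?R) (mm (of_int_mat k) N) = mm (of_int_mat (mm ?R k)) N"
    by (simp add: of_int_mat_mm mm_assoc)
  have g0: "\<gamma> \<noteq> 0" "\<delta> \<noteq> 0" using Inv_facts[OF I3[unfolded P3 N3] refl refl] by auto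
  have N4': "mm (of_int_mat ?R) (mm (of_int_mat k) N) = (\<alpha>+\<gamma>, \<beta>+\<delta>, \<gamma>, \<delta>)" using N3 by simp
  have "xe (mm (of_int_mat (mm ?R k)) N) = xe (mm (of_int_mat k) N) + 1"
    unfolding N4[symmetric] N4' N3 using g0 by (simp add: field_simps)
  moreover have "ye (mm (of_int_mat (mm ?R k)) N) = ye (mm (of_int_mat k) N) + 1"
    unfolding N4[symmetric] N4' N3 using g0 by (simp add: field_simps)
  moreover have "dt (mm ?R k) = 1" using k by (simp add: dt_mm)
  ultimately show ?thesis using I4 N4 x3 y3 ds
    by (intro exI[of _ "mm ?R k"] exI[of _ ds]) simp
qed

lemma div_seq: assumes "r > (0::nat)" shows "filterlim (\<lambda>n. n div r) sequentially sequentially"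
  unfolding filterlim_at_top
proof
  fix Z :: nat
  show "\<forall>\<^sub>F n in sequentially. Z \<le> n div r"
    unfolding eventually_sequentially
  proof (intro exI allI impI)
    fix n assume "Z * r \<le> n"
    then have "Z * r div r \<le> n div r" by (rule div_le_mono)
    then show "Z \<le> n div r" using assms by simp
  qed
qed

lemma contr_lim:
  fixes z :: "nat \<Rightarrow> real"
  assumes r: "r \<ge> 1" and rec: "\<And>n. z (n + r) = F (z n)" and inI: "\<And>n. z n \<in> I"
    and con: "\<And>v. v \<in> I \<Longrightarrow> \<bar>F v - L\<bar> \<le> \<bar>v - L\<bar> / \<kappa>" and k: "\<kappa> > 1"
  shows "z \<longlonglongrightarrow> L"
proof -
  define C where "C = (\<Sum>j<r. \<bar>z j - L\<bar>)"
  have bnd: "\<bar>z n - L\<bar> \<le> C * (1/\<kappa>)^(n div r)" for n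
  proof (induction n rule: less_induct)
    case (less n)
    show ?case
    proof (cases "n < r")
      case True
      then have "\<bar>z n - L\<bar> \<le> C" unfolding C_def
        by (intro member_le_sum) auto
      then show ?thesis using True by simp
    next
      case False
      define m where "m = n - r"
      have nm: "n = m + r" using False unfolding m_def by simp
      have mlt: "m < n" using r nm by simp
      have "\<bar>z n - L\<bar> = \<bar>F (z m) - L\<bar>" using rec nm by simp
      also have "\<dots> \<le> \<bar>z m - L\<bar> / \<kappa>" using con inI by blast
      also have "\<dots> \<le> C * (1/\<kappa>)^(m div r) / \<kappa>"
        using less.IH[OF mlt] k by (simp add: divide_right_mono)
      also have "\<dots> = C * (1/\<kappa>)^(n div r)"
        unfolding nm using r by (simp add: div_add_self2 field_simps)
      finally show ?thesis .
    qed
  qed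
  have k1: "norm (1/\<kappa>) < 1" using k by simp
  have "(\<lambda>n. (1/\<kappa>)^(n div r)) \<longlonglongrightarrow> 0"
    using filterlim_compose[OF LIMSEQ_power_zero[OF k1] div_seq] r by simp
  then have "(\<lambda>n. C * (1/\<kappa>)^(n div r)) \<longlonglongrightarrow> 0" by (rule tendsto_mult_right_zero)
  then have "(\<lambda>n. z n - L) \<longlonglongrightarrow> 0"
    by (rule Lim_null_comparison[rotated]) (use bnd in auto)
  then show ?thesis by (rule LIM_zero_cancel)
qed

lemma moeb_inv: "Im w > 0 \<Longrightarrow> dt G = (1::real) \<Longrightarrow> moeb (iv G) (moeb G w) = w"
  using moeb_comp[of w G "iv G"] iv_mm[of G] by simp

lemma lconv_conv:
  assumes ds: "ds \<noteq> []" "set ds \<subseteq> Dig" and r: "r = length ds"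
    and W: "dmat ds = (p,q,s,t)" and I: "Inv (p,q,s,t) (\<alpha>,\<beta>,\<gamma>,\<delta>) l"
    and x: "x = \<alpha>/\<gamma>" and y: "y = \<beta>/\<delta>" and x1: "x > 1" and y1: "y < 1"
  shows "(\<lambda>n. lconv (\<lambda>i. ds ! (i mod r)) n) \<longlonglongrightarrow> x"
proof -
  define d where "d = (\<lambda>i. ds ! (i mod r))"
  have r1: "r \<ge> 1" using ds r by (cases ds) auto
  note f = Inv_facts[OF I x y]
  have s1: "s \<ge> 1" using dmat_pos[OF ds(2) ds(1) W] by simp
  have l1: "l > 1" using f by simp
  have pxs: "real_of_int p - real_of_int s * x = 1/l" using f(4,11) by linarith
  have dig: "d i \<in> Dig" for i
  proof -
    have "i mod r < length ds" unfolding r by (rule mod_less_divisor) (use ds(1) in simp)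
    then show ?thesis unfolding d_def using ds(2) nth_mem by blast
  qed
  have rec: "lconv d (n + r) = dfun ds (lconv d n)" for n
  proof -
    have "lconv d (n + length ds) = dfun ds (lconv (\<lambda>i. d (i + length ds)) n)"
      by (rule lconv_shift) (use r in \<open>simp add: d_def\<close>)
    moreover have "(\<lambda>i. d (i + length ds)) = d" by (rule ext) (simp add: d_def r)
    ultimately show ?thesis using r by simp
  qed
  define \<kappa> where "\<kappa> = l * (real_of_int s + real_of_int t)"
  have st: "real_of_int s + real_of_int t > 1/l"
  proof -
    have "real_of_int s * y < real_of_int s * 1" using y1 s1 by simp
    then show ?thesis using f(5) by linarith
  qed
  have k1: "\<kappa> > 1" unfolding \<kappa>_def using st l1 by (simp add: field_simps)
  have con: "\<bar>dfun ds v - x\<bar> \<le> \<bar>v - x\<bar> / \<kappa>" if v: "v \<in> {v. v \<ge> 1}" for v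
  proof -
    have v1: "v \<ge> 1" using v by simp
    have fm: "of_int s * v + of_int t > 0" "dfun ds v = (of_int p * v + of_int q) / (of_int s * v + of_int t)"
      using dfun_mat[OF ds(2) v1 W] by auto
    have qx: "real_of_int q = x * (real_of_int s * x + real_of_int t) - real_of_int p * x"
      using f(4,6) by (simp add: algebra_simps)
    have "dfun ds v - x = (v - x) * (of_int p - of_int s * x) / (of_int s * v + of_int t)"
      using fm unfolding qx by (simp add: field_simps)
    also have "\<dots> = (v - x) / (l * (of_int s * v + of_int t))" unfolding pxs using l1 by simp
    finally have e: "dfun ds v - x = (v - x) / (l * (of_int s * v + of_int t))" .
    have ge: "l * (of_int s * v + of_int t) \<ge> \<kappa>"
    proof -
      have "real_of_int s * v \<ge> real_of_int s * 1" using v1 s1 by (intro mult_left_mono) auto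
      then show ?thesis unfolding \<kappa>_def using l1 by (intro mult_left_mono) auto
    qed
    have kp: "\<kappa> > 0" using k1 by simp
    have "\<bar>dfun ds v - x\<bar> = \<bar>v - x\<bar> / (l * (of_int s * v + of_int t))"
      unfolding e using fm(1) l1 by (simp add: abs_divide)
    also have "\<dots> \<le> \<bar>v - x\<bar> / \<kappa>"
      by (rule divide_left_mono) (use ge kp in auto)
    finally show ?thesis .
  qed
  have "lconv d \<longlonglongrightarrow> x"
  proof (rule contr_lim[where z="lconv d" and F="dfun ds" and I="{v. v \<ge> 1}" and \<kappa>=\<kappa>])
    show "1 \<le> r" by (rule r1)
    show "lconv d (n + r) = dfun ds (lconv d n)" for n by (rule rec)
    show "lconv d n \<in> {v. v \<ge> 1}" for n using lconv_ge1[OF dig] by simp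
    show "\<bar>dfun ds v - x\<bar> \<le> \<bar>v - x\<bar> / \<kappa>" if "v \<in> {v. v \<ge> 1}" for v using con[OF that] .
    show "1 < \<kappa>" by (rule k1)
  qed
  then show ?thesis unfolding d_def .
qed

lemma fconv_conv:
  assumes ds: "ds \<noteq> []" "set ds \<subseteq> Dig" and r: "r = length ds"
    and W: "dmat ds = (p,q,s,t)" and I: "Inv (p,q,s,t) (\<alpha>,\<beta>,\<gamma>,\<delta>) l"
    and x: "x = \<alpha>/\<gamma>" and y: "y = \<beta>/\<delta>" and x1: "x > 1" and y1: "y < 1"
  shows "(\<lambda>n. fconv (\<lambda>j. (snd (ds ! (r - 1 - j mod r)), fst (ds ! (r - 1 - j mod r)))) n) \<longlonglongrightarrow> -y"
proof -
  define e where "e = (\<lambda>j. (snd (ds ! (r - 1 - j mod r)), fst (ds ! (r - 1 - j mod r))))"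
  have r1: "r \<ge> 1" using ds r by (cases ds) auto
  note f = Inv_facts[OF I x y]
  have s1: "s \<ge> 1" using dmat_pos[OF ds(2) ds(1) W] by simp
  have l1: "l > 1" using f by simp
  have pxs: "real_of_int p - real_of_int s * x = 1/l" using f(4,11) by linarith
  have dig: "(snd (e i), fst (e i)) \<in> Dig" for i
  proof -
    have "r - 1 - i mod r < length ds" using r r1 by simp
    then show ?thesis unfolding e_def using ds(2) nth_mem by fastforce
  qed
  have rec: "fconv e (n + r) = efun (rev ds) (fconv e n)" for n
  proof -
    have "fconv e (n + length (rev ds)) = efun (rev ds) (fconv (\<lambda>i. e (i + length (rev ds))) n)"
    proof (rule fconv_shift)
      fix i assume i: "i < length (rev ds)"
      then have im: "i mod r = i" using r by simp
      have "rev ds ! i = ds ! (length ds - Suc i)" using i by (simp add: rev_nth)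
      moreover have "length ds - Suc i = r - 1 - i mod r" using im r by simp
      ultimately show "e i = (snd (rev ds ! i), fst (rev ds ! i))" unfolding e_def by simp
    qed
    moreover have "(\<lambda>i. e (i + length (rev ds))) = e" by (rule ext) (simp add: e_def r)
    ultimately show ?thesis using r by simp
  qed
  define \<kappa> where "\<kappa> = l * (real_of_int p - real_of_int s)"
  have k1: "\<kappa> > 1"
  proof -
    have "real_of_int p - real_of_int s = 1/l + real_of_int s * (x - 1)" using pxs by (simp add: algebra_simps)
    moreover have "real_of_int s * (x - 1) > 0" using s1 x1 by simp
    ultimately have "l * (real_of_int p - real_of_int s) = 1 + l * (real_of_int s * (x - 1))"
      using l1 by (simp add: algebra_simps)
    moreover have "l * (real_of_int s * (x - 1)) > 0" using l1 \<open>real_of_int s * (x - 1) > 0\<close> by simp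
    ultimately show ?thesis unfolding \<kappa>_def by simp
  qed
  have con: "\<bar>efun (rev ds) u - (-y)\<bar> \<le> \<bar>u - (-y)\<bar> / \<kappa>" if u: "u \<in> {u. u > -1}" for u
  proof -
    have u1: "u > -1" using u by simp
    have fm: "of_int s * u + of_int p > 0" "efun (rev ds) u = (of_int t * u + of_int q) / (of_int s * u + of_int p)"
      using efun_mat[OF ds(2) u1 W] by auto
    have qy: "real_of_int q = y * (real_of_int s * y + real_of_int t) - real_of_int p * y"
      using f(5,7) by (simp add: algebra_simps)
    have ty: "real_of_int t + real_of_int s * y = 1/l" using f(5) by simp
    have "efun (rev ds) u - (-y) = (u + y) * (of_int t + of_int s * y) / (of_int s * u + of_int p)"
      using fm unfolding qy by (simp add: field_simps)
    also have "\<dots> = (u + y) / (l * (of_int s * u + of_int p))" unfolding ty using l1 by simp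
    finally have e: "efun (rev ds) u - (-y) = (u + y) / (l * (of_int s * u + of_int p))" .
    have ge: "l * (of_int s * u + of_int p) \<ge> \<kappa>"
    proof -
      have "real_of_int s * u \<ge> real_of_int s * (-1)" using u1 s1 by (intro mult_left_mono) auto
      then show ?thesis unfolding \<kappa>_def using l1 by (intro mult_left_mono) auto
    qed
    have kp: "\<kappa> > 0" using k1 by simp
    have "\<bar>efun (rev ds) u - (-y)\<bar> = \<bar>u + y\<bar> / (l * (of_int s * u + of_int p))"
      unfolding e using fm(1) l1 by (simp add: abs_divide)
    also have "\<dots> \<le> \<bar>u + y\<bar> / \<kappa>"
      by (rule divide_left_mono) (use ge kp in auto)
    finally show ?thesis by simp
  qed
  have "fconv e \<longlonglongrightarrow> -y"
  proof (rule contr_lim[where z="fconv e" and F="efun (rev ds)" and I="{u. u > -1}" and \<kappa>=\<kappa>])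
    show "1 \<le> r" by (rule r1)
    show "fconv e (n + r) = efun (rev ds) (fconv e n)" for n by (rule rec)
    show "fconv e n \<in> {u. u > -1}" for n using fconv_gt[OF dig] by simp
    show "\<bar>efun (rev ds) v - (-y)\<bar> \<le> \<bar>v - (-y)\<bar> / \<kappa>" if "v \<in> {u. u > -1}" for v using con[OF that] .
    show "1 < \<kappa>" by (rule k1)
  qed
  then show ?thesis unfolding e_def .
qed

lemma forward:
  fixes \<gamma> :: "real \<Rightarrow> complex"
  assumes geo: "is_geodesic \<gamma>" and cl: "closed_on_M \<gamma>"
  shows "(\<exists>g\<in>SL2Z. \<exists>x y.
       ((\<lambda>t. moeb (of_int_mat g) (\<gamma> t)) \<longlongrightarrow> complex_of_real x) at_top \<and>
       ((\<lambda>t. moeb (of_int_mat g) (\<gamma> t)) \<longlongrightarrow> complex_of_real y) at_bot \<and>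
       (x, y) \<in> S_set \<and>
       (\<exists>(\<epsilon>::real) (r::nat) (ds::(int \<times> int) list).
          \<epsilon> \<in> {-1, 1} \<and> r \<ge> 1 \<and> length ds = r \<and>
          set ds \<subseteq> {(2, -1), (1, 1)} \<and>
          (\<Prod>i<r. - snd (ds ! i)) = 1 \<and>
          (\<lambda>n. \<epsilon> * lconv (\<lambda>i. ds ! (i mod r)) n) \<longlonglongrightarrow> x \<and>
          (\<lambda>n. - \<epsilon> * fconv (\<lambda>j. (snd (ds ! (r - 1 - j mod r)), fst (ds ! (r - 1 - j mod r)))) n)
             \<longlonglongrightarrow> y))"
proof -
  obtain a b c d where H: "a*d - b*c = 1" and gam: "\<And>t. \<gamma> t = moeb (a,b,c,d) (\<i> * of_real (exp t))"
    using geo unfolding is_geodesic_def by blast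
  obtain T g where T: "T > 0" and g: "g \<in> SL2Z" and per: "\<And>t. \<gamma> (t + T) = moeb (of_int_mat g) (\<gamma> t)"
    using cl unfolding closed_on_M_def by blast
  let ?H = "(a,b,c,d)"
  have dH: "dt ?H = 1" using H by simp
  obtain P l where IP: "Inv P ?H l"
    using closed_Inv[OF refl dH gam T _ per] g by (auto simp: SL2Z_dt)
  obtain k ds where k: "dt k = 1" and ds: "ds \<noteq> []" "set ds \<subseteq> Dig"
    and IW: "Inv (dmat ds) (mm (of_int_mat k) ?H) l"
    and xr: "1 < xe (mm (of_int_mat k) ?H)" "xe (mm (of_int_mat k) ?H) < 2" and yr: "ye (mm (of_int_mat k) ?H) < 1"
    using reduce_word[OF IP] by blast
  obtain \<alpha> \<beta> \<gamma>' \<delta> where N: "mm (of_int_mat k) ?H = (\<alpha>,\<beta>,\<gamma>',\<delta>)" by (cases "mm (of_int_mat k) ?H") auto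
  obtain pp qq ss tt where W: "dmat ds = (pp,qq,ss,tt)" by (cases "dmat ds") auto
  define x where "x = \<alpha>/\<gamma>'"
  define y where "y = \<beta>/\<delta>"
  have IW': "Inv (pp,qq,ss,tt) (\<alpha>,\<beta>,\<gamma>',\<delta>) l" using IW N W by simp
  note f = Inv_facts[OF IW' x_def y_def]
  have x12: "1 < x" "x < 2" using xr N x_def by auto
  have y1: "y < 1" using yr N y_def by auto
  have dN: "\<alpha>*\<delta> - \<beta>*\<gamma>' = 1" using IW' by (simp add: Inv_def)
  have dP: "pp * tt - qq * ss = 1" using IW' by (simp add: Inv_def)
  have mo: "moeb (of_int_mat k) (\<gamma> t) = moeb (\<alpha>,\<beta>,\<gamma>',\<delta>) (\<i> * of_real (exp t))" for t
  proof -
    have "moeb (of_int_mat k) (\<gamma> t) = moeb (mm (of_int_mat k) ?H) (\<i> * of_real (exp t))"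
      unfolding gam by (rule moeb_comp) (use dH k in \<open>auto simp: dt_of_int_mat\<close>)
    then show ?thesis using N by simp
  qed
  have top: "((\<lambda>t. moeb (of_int_mat k) (\<gamma> t)) \<longlongrightarrow> complex_of_real x) at_top"
    unfolding mo using lim_top_iff[OF dN] f(2) x_def by blast
  have bot: "((\<lambda>t. moeb (of_int_mat k) (\<gamma> t)) \<longlongrightarrow> complex_of_real y) at_bot"
    unfolding mo using lim_bot_iff[OF dN] f(3) y_def by blast
  have S: "(x,y) \<in> S_set" unfolding S_set_def using x12 y1 by simp
  define r where "r = length ds"
  have r1: "r \<ge> 1" using ds r_def by (cases ds) auto
  have prod: "(\<Prod>i<r. - snd (ds ! i)) = 1" using dt_dmat[of ds] W dP r_def by simp
  have L1: "(\<lambda>n. 1 * lconv (\<lambda>i. ds ! (i mod r)) n) \<longlonglongrightarrow> x"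
    using lconv_conv[OF ds r_def W IW' x_def y_def x12(1) y1] by simp
  have L2: "(\<lambda>n. - 1 * fconv (\<lambda>j. (snd (ds ! (r - 1 - j mod r)), fst (ds ! (r - 1 - j mod r)))) n) \<longlonglongrightarrow> y"
    using tendsto_minus[OF fconv_conv[OF ds r_def W IW' x_def y_def x12(1) y1]] by simp
  have dig: "set ds \<subseteq> {(2, -1), (1, 1)}" using ds(2) by (simp add: Dig_def)
  have kS: "k \<in> SL2Z" using k by (simp add: SL2Z_dt)
  show ?thesis
    apply (rule bexI[OF _ kS])
    apply (rule exI[of _ x], rule exI[of _ y])
    apply (intro conjI top bot S)
    apply (rule exI[of _ 1], rule exI[of _ r], rule exI[of _ ds])
    using r1 r_def dig prod L1 L2 by simp
qed

lemma close_gt: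
  assumes dN: "dt N = (1::real)" and dV: "dt V = 1"
    and eq: "mm (of_int_mat V) N = mm N (l,0,0,m)" and lm: "l * m = 1" and l2: "l^2 > 1"
  shows "moeb N (\<i> * of_real (exp (t + ln (l^2)))) = moeb (of_int_mat V) (moeb N (\<i> * of_real (exp t)))"
proof -
  let ?z = "\<i> * of_real (exp t) :: complex"
  have z: "Im ?z > 0" by simp
  have l0: "l \<noteq> 0" using lm by auto
  have m: "m = 1/l" using lm l0 by (simp add: field_simps)
  have dV': "dt (of_int_mat V) = (1::real)" using dV by (simp add: dt_of_int_mat)
  have "moeb (of_int_mat V) (moeb N ?z) = moeb (mm (of_int_mat V) N) ?z"
    by (rule moeb_comp) (use z dN dV' in auto)
  also have "\<dots> = moeb (mm N (l,0,0,m)) ?z" using eq by simp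
  also have "\<dots> = moeb N (moeb (l,0,0,m) ?z)"
    by (rule moeb_comp[symmetric]) (use z dN lm in auto)
  also have "moeb (l,0,0,m) ?z = \<i> * of_real (exp (t + ln (l^2)))"
  proof -
    have "moeb (l,0,0,m) ?z = of_real l * ?z / of_real m" by (simp add: moeb_simp)
    also have "\<dots> = of_real (l^2) * ?z" unfolding m using l0 by (simp add: field_simps power2_eq_square)
    also have "\<dots> = \<i> * of_real (exp (t + ln (l^2)))"
    proof -
      have "exp (ln (l^2)) = l^2" using l2 l0 by (intro exp_ln) simp
      then show ?thesis by (simp add: exp_add mult.commute)
    qed
    finally show ?thesis .
  qed
  finally show ?thesis by simp
qed

lemma close_main:
  assumes dN: "dt N = (1::real)" and dV: "dt V = 1" and V: "V = (a,b,c,d)" and c0: "c \<noteq> 0"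
    and eq: "mm (of_int_mat V) N = mm N (l,0,0,m)" and lm: "l * m = 1"
  shows "\<exists>T>0. \<exists>V'. dt V' = 1 \<and> (\<forall>t. moeb N (\<i> * of_real (exp (t + T))) = moeb (of_int_mat V') (moeb N (\<i> * of_real (exp t))))"
proof -
  obtain \<alpha> \<beta> \<gamma> \<delta> where Nd: "N = (\<alpha>,\<beta>,\<gamma>,\<delta>)" by (cases N) auto
  have l0: "l \<noteq> 0" using lm by auto
  have l2: "l^2 \<noteq> 1"
  proof
    assume "l^2 = 1"
    then have "l = 1 \<or> l = -1" using power2_eq_1_iff by blast
    then have ml: "m = l" using lm by auto
    have e3: "of_int c * \<alpha> + of_int d * \<gamma> = \<gamma> * l" and e4: "of_int c * \<beta> + of_int d * \<delta> = \<delta> * l"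
      using eq unfolding V Nd ml by auto
    have "of_int c * (\<alpha>*\<delta> - \<beta>*\<gamma>) = (of_int c * \<alpha> + of_int d * \<gamma>) * \<delta> - (of_int c * \<beta> + of_int d * \<delta>) * \<gamma>"
      by (simp add: algebra_simps)
    also have "\<dots> = 0" unfolding e3 e4 by (simp add: algebra_simps)
    finally have "real_of_int c = 0" using dN Nd by simp
    then show False using c0 by simp
  qed
  show ?thesis
  proof (cases "l^2 > 1")
    case True
    have "ln (l^2) > 0" using True by (rule ln_gt_zero)
    then show ?thesis using close_gt[OF dN dV eq lm True] dV by blast
  next
    case False
    then have lt: "l^2 < 1" using l2 by simp
    have m0: "m = 1/l" using lm l0 by (simp add: field_simps)
    have m2: "m^2 > 1"
    proof -
      have "l^2 > 0" using l0 by simp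
      then have "1 / l^2 > 1" using lt by (simp add: field_simps)
      then show ?thesis unfolding m0 by (simp add: power_divide)
    qed
    let ?V = "of_int_mat V" and ?D = "(l,0,0,m) :: real\<times>real\<times>real\<times>real"
    have dV': "dt ?V = 1" using dV by (simp add: dt_of_int_mat)
    have dD: "dt ?D = 1" using lm by simp
    have "mm (of_int_mat (iv V)) N = mm N (m,0,0,l)"
    proof -
      have "mm (mm (iv ?V) N) ?D = mm (iv ?V) (mm ?V N)" using eq by (simp add: mm_assoc)
      also have "\<dots> = N" using iv_mm[OF dV'] by (simp add: mm_assoc[symmetric])
      finally have h: "mm (mm (iv ?V) N) ?D = N" .
      have "mm (iv ?V) N = mm (mm (mm (iv ?V) N) ?D) (iv ?D)" using mm_iv[OF dD] by (simp add: mm_assoc)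
      also have "\<dots> = mm N (m,0,0,l)" unfolding h by simp
      finally show ?thesis by (simp add: of_int_mat_iv)
    qed
    moreover have "dt (iv V) = 1" using dV by simp
    moreover have "m * l = 1" using lm by (simp add: mult.commute)
    ultimately have "\<forall>t. moeb N (\<i> * of_real (exp (t + ln (m^2)))) = moeb (of_int_mat (iv V)) (moeb N (\<i> * of_real (exp t)))"
      using close_gt[OF dN _ _ _ m2] by blast
    moreover have "ln (m^2) > 0" using m2 by (rule ln_gt_zero)
    ultimately show ?thesis using \<open>dt (iv V) = 1\<close> by blast
  qed
qed

lemma dig_d: "set ds \<subseteq> Dig \<Longrightarrow> ds \<noteq> [] \<Longrightarrow> r = length ds \<Longrightarrow> ds ! (i mod r) \<in> Dig"
proof -
  assume a: "set ds \<subseteq> Dig" "ds \<noteq> []" "r = length ds"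
  have "i mod r < length ds" unfolding a(3) by (rule mod_less_divisor) (use a(2) in simp)
  then show ?thesis using a(1) nth_mem by blast
qed

lemma dig_e: "set ds \<subseteq> Dig \<Longrightarrow> ds \<noteq> [] \<Longrightarrow> r = length ds \<Longrightarrow>
  (snd ((\<lambda>j. (snd (ds ! (r - 1 - j mod r)), fst (ds ! (r - 1 - j mod r)))) i),
   fst ((\<lambda>j. (snd (ds ! (r - 1 - j mod r)), fst (ds ! (r - 1 - j mod r)))) i)) \<in> Dig"
proof -
  assume a: "set ds \<subseteq> Dig" "ds \<noteq> []" "r = length ds"
  have "r - 1 - i mod r < length ds" using a by (cases ds) auto
  then have "ds ! (r - 1 - i mod r) \<in> Dig" using a(1) nth_mem by blast
  then show ?thesis by simp
qed

lemma lconv_rec: "ds \<noteq> [] \<Longrightarrow> r = length ds \<Longrightarrow>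
  lconv (\<lambda>i. ds ! (i mod r)) (n + r) = dfun ds (lconv (\<lambda>i. ds ! (i mod r)) n)"
proof -
  assume a: "ds \<noteq> []" "r = length ds"
  define d where "d = (\<lambda>i. ds ! (i mod r))"
  have "lconv d (n + length ds) = dfun ds (lconv (\<lambda>i. d (i + length ds)) n)"
    by (rule lconv_shift) (use a in \<open>simp add: d_def\<close>)
  moreover have "(\<lambda>i. d (i + length ds)) = d" by (rule ext) (simp add: d_def a)
  ultimately show ?thesis using a unfolding d_def by simp
qed

lemma fconv_rec: "ds \<noteq> [] \<Longrightarrow> r = length ds \<Longrightarrow>
  fconv (\<lambda>j. (snd (ds ! (r - 1 - j mod r)), fst (ds ! (r - 1 - j mod r)))) (n + r) =
  efun (rev ds) (fconv (\<lambda>j. (snd (ds ! (r - 1 - j mod r)), fst (ds ! (r - 1 - j mod r)))) n)"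
proof -
  assume a: "ds \<noteq> []" "r = length ds"
  define e where "e = (\<lambda>j. (snd (ds ! (r - 1 - j mod r)), fst (ds ! (r - 1 - j mod r))))"
  have "fconv e (n + length (rev ds)) = efun (rev ds) (fconv (\<lambda>i. e (i + length (rev ds))) n)"
  proof (rule fconv_shift)
    fix i assume i: "i < length (rev ds)"
    then have im: "i mod r = i" using a by simp
    have "rev ds ! i = ds ! (length ds - Suc i)" using i by (simp add: rev_nth)
    moreover have "length ds - Suc i = r - 1 - i mod r" using im a by simp
    ultimately show "e i = (snd (rev ds ! i), fst (rev ds ! i))" unfolding e_def by simp
  qed
  moreover have "(\<lambda>i. e (i + length (rev ds))) = e" by (rule ext) (simp add: e_def a)
  ultimately show ?thesis using a unfolding e_def by simp
qed

lemma fix_l: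
  assumes ds: "ds \<noteq> []" "set ds \<subseteq> Dig" and r: "r = length ds" and W: "dmat ds = (p,q,s,t)"
    and L: "lconv (\<lambda>i. ds ! (i mod r)) \<longlonglongrightarrow> X"
  shows "X \<ge> 1" "real_of_int p * X + real_of_int q = X * (real_of_int s * X + real_of_int t)"
proof -
  define d where "d = (\<lambda>i. ds ! (i mod r))"
  have dig: "d i \<in> Dig" for i unfolding d_def using dig_d[OF ds(2,1) r] .
  have ge: "lconv d n \<ge> 1" for n using lconv_ge1[OF dig] .
  show X1: "X \<ge> 1" by (rule LIMSEQ_le_const[OF L[folded d_def]]) (use ge in auto)
  have fX: "of_int s * X + of_int t > 0" using dfun_mat[OF ds(2) X1 W] by simp
  have h1: "(\<lambda>n. lconv d (n + r)) \<longlonglongrightarrow> X" using LIMSEQ_ignore_initial_segment[OF L[folded d_def]] .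
  have eq: "lconv d (n + r) = (of_int p * lconv d n + of_int q) / (of_int s * lconv d n + of_int t)" for n
    using lconv_rec[OF ds(1) r, of n] dfun_mat[OF ds(2) ge W] unfolding d_def by simp
  have h2: "(\<lambda>n. (of_int p * lconv d n + of_int q) / (of_int s * lconv d n + of_int t)) \<longlonglongrightarrow>
      (of_int p * X + of_int q) / (of_int s * X + of_int t)"
    by (intro tendsto_intros L[folded d_def]) (use fX in simp)
  have "X = (of_int p * X + of_int q) / (of_int s * X + of_int t)"
    using LIMSEQ_unique[OF h1 h2[folded eq]] .
  then show "real_of_int p * X + real_of_int q = X * (real_of_int s * X + real_of_int t)"
    using fX by (simp add: field_simps)
qed

lemma fix_f:
  assumes ds: "ds \<noteq> []" "set ds \<subseteq> Dig" and r: "r = length ds" and W: "dmat ds = (p,q,s,t)"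
    and L: "fconv (\<lambda>j. (snd (ds ! (r - 1 - j mod r)), fst (ds ! (r - 1 - j mod r)))) \<longlonglongrightarrow> U"
    and U: "U > -1"
  shows "U * (real_of_int s * U + real_of_int p) = real_of_int t * U + real_of_int q"
proof -
  define e where "e = (\<lambda>j. (snd (ds ! (r - 1 - j mod r)), fst (ds ! (r - 1 - j mod r))))"
  have dig: "(snd (e i), fst (e i)) \<in> Dig" for i unfolding e_def using dig_e[OF ds(2,1) r] .
  have gt: "fconv e n > -1" for n using fconv_gt[OF dig] .
  have fU: "of_int s * U + of_int p > 0" using efun_mat[OF ds(2) U W] by simp
  have h1: "(\<lambda>n. fconv e (n + r)) \<longlonglongrightarrow> U" using LIMSEQ_ignore_initial_segment[OF L[folded e_def]] .
  have eq: "fconv e (n + r) = (of_int t * fconv e n + of_int q) / (of_int s * fconv e n + of_int p)" for n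
    using fconv_rec[OF ds(1) r, of n] efun_mat[OF ds(2) gt W] unfolding e_def by simp
  have h2: "(\<lambda>n. (of_int t * fconv e n + of_int q) / (of_int s * fconv e n + of_int p)) \<longlonglongrightarrow>
      (of_int t * U + of_int q) / (of_int s * U + of_int p)"
    by (intro tendsto_intros L[folded e_def]) (use fU in simp)
  have "U = (of_int t * U + of_int q) / (of_int s * U + of_int p)"
    using LIMSEQ_unique[OF h1 h2[folded eq]] .
  then show ?thesis using fU by (simp add: field_simps)
qed

lemma backward:
  fixes \<gamma> :: "real \<Rightarrow> complex"
  assumes geo: "is_geodesic \<gamma>"
    and R: "(\<exists>g\<in>SL2Z. \<exists>x y.
       ((\<lambda>t. moeb (of_int_mat g) (\<gamma> t)) \<longlongrightarrow> complex_of_real x) at_top \<and>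
       ((\<lambda>t. moeb (of_int_mat g) (\<gamma> t)) \<longlongrightarrow> complex_of_real y) at_bot \<and>
       (x, y) \<in> S_set \<and>
       (\<exists>(\<epsilon>::real) (r::nat) (ds::(int \<times> int) list).
          \<epsilon> \<in> {-1, 1} \<and> r \<ge> 1 \<and> length ds = r \<and>
          set ds \<subseteq> {(2, -1), (1, 1)} \<and>
          (\<Prod>i<r. - snd (ds ! i)) = 1 \<and>
          (\<lambda>n. \<epsilon> * lconv (\<lambda>i. ds ! (i mod r)) n) \<longlonglongrightarrow> x \<and>
          (\<lambda>n. - \<epsilon> * fconv (\<lambda>j. (snd (ds ! (r - 1 - j mod r)), fst (ds ! (r - 1 - j mod r)))) n)
             \<longlonglongrightarrow> y))"
  shows "closed_on_M \<gamma>"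
proof -
  obtain a b c d where H: "a*d - b*c = 1" and gam: "\<And>t. \<gamma> t = moeb (a,b,c,d) (\<i> * of_real (exp t))"
    using geo unfolding is_geodesic_def by blast
  let ?H = "(a,b,c,d)"
  have dH: "dt ?H = 1" using H by simp
  obtain g x y \<epsilon> r ds where g: "g \<in> SL2Z"
    and top: "((\<lambda>t. moeb (of_int_mat g) (\<gamma> t)) \<longlongrightarrow> complex_of_real x) at_top"
    and bot: "((\<lambda>t. moeb (of_int_mat g) (\<gamma> t)) \<longlongrightarrow> complex_of_real y) at_bot"
    and S: "(x, y) \<in> S_set" and eps: "\<epsilon> \<in> {-1, 1}" and r1: "r \<ge> 1" and r: "length ds = r"
    and dsd: "set ds \<subseteq> {(2, -1), (1, 1)}" and prod: "(\<Prod>i<r. - snd (ds ! i)) = 1"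
    and Lx: "(\<lambda>n. \<epsilon> * lconv (\<lambda>i. ds ! (i mod r)) n) \<longlonglongrightarrow> x"
    and Ly: "(\<lambda>n. - \<epsilon> * fconv (\<lambda>j. (snd (ds ! (r - 1 - j mod r)), fst (ds ! (r - 1 - j mod r)))) n) \<longlonglongrightarrow> y"
    using R by blast
  have ds: "ds \<noteq> []" "set ds \<subseteq> Dig" using r r1 dsd by (auto simp: Dig_def)
  have rr: "r = length ds" using r by simp
  let ?G = "of_int_mat g"
  have dg: "dt g = 1" using g by (simp add: SL2Z_dt)
  have dG: "dt ?G = 1" using dg by (simp add: dt_of_int_mat)
  obtain \<alpha> \<beta> \<gamma>' \<delta> where N: "mm ?G ?H = (\<alpha>,\<beta>,\<gamma>',\<delta>)" by (cases "mm ?G ?H") auto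
  have dN: "\<alpha>*\<delta> - \<beta>*\<gamma>' = 1" using dt_mm[of ?G ?H] dG dH N by simp
  have Imt: "Im (\<gamma> t) > 0" for t unfolding gam by (rule Im_moeb) (use H in simp_all)
  have mo: "moeb ?G (\<gamma> t) = moeb (\<alpha>,\<beta>,\<gamma>',\<delta>) (\<i> * of_real (exp t))" for t
  proof -
    have "moeb ?G (\<gamma> t) = moeb (mm ?G ?H) (\<i> * of_real (exp t))"
      unfolding gam by (rule moeb_comp) (use dH dG in auto)
    then show ?thesis using N by simp
  qed
  have xg: "\<gamma>' \<noteq> 0" "x = \<alpha>/\<gamma>'" using top[unfolded mo] lim_top_iff[OF dN] by blast+
  have yd: "\<delta> \<noteq> 0" "y = \<beta>/\<delta>" using bot[unfolded mo] lim_bot_iff[OF dN] by blast+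
  obtain p q s t where W: "dmat ds = (p,q,s,t)" by (cases "dmat ds") auto
  have dP: "p * t - q * s = 1" using dt_dmat[of ds] W prod rr by simp
  have s1: "s \<ge> 1" using dmat_pos[OF ds(2,1) W] by simp
  have ee: "\<epsilon> * \<epsilon> = 1" using eps by auto
  have Lx': "lconv (\<lambda>i. ds ! (i mod r)) \<longlonglongrightarrow> \<epsilon> * x"
  proof -
    have "(\<lambda>n. \<epsilon> * (\<epsilon> * lconv (\<lambda>i. ds ! (i mod r)) n)) \<longlonglongrightarrow> \<epsilon> * x" by (rule tendsto_mult_left[OF Lx])
    moreover have "(\<lambda>n. \<epsilon> * (\<epsilon> * lconv (\<lambda>i. ds ! (i mod r)) n)) = lconv (\<lambda>i. ds ! (i mod r))"
      by (rule ext) (simp add: mult.assoc[symmetric] ee)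
    ultimately show ?thesis by simp
  qed
  have Ly': "fconv (\<lambda>j. (snd (ds ! (r - 1 - j mod r)), fst (ds ! (r - 1 - j mod r)))) \<longlonglongrightarrow> - \<epsilon> * y"
  proof -
    have "(\<lambda>n. - \<epsilon> * (- \<epsilon> * fconv (\<lambda>j. (snd (ds ! (r - 1 - j mod r)), fst (ds ! (r - 1 - j mod r)))) n)) \<longlonglongrightarrow> - \<epsilon> * y"
      by (rule tendsto_mult_left[OF Ly])
    moreover have "(\<lambda>n. - \<epsilon> * (- \<epsilon> * fconv (\<lambda>j. (snd (ds ! (r - 1 - j mod r)), fst (ds ! (r - 1 - j mod r)))) n)) =
       fconv (\<lambda>j. (snd (ds ! (r - 1 - j mod r)), fst (ds ! (r - 1 - j mod r))))"
      by (rule ext) (simp add: mult.assoc[symmetric] ee)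
    ultimately show ?thesis by simp
  qed
  note fl = fix_l[OF ds(1,2) rr W Lx']
  have U1: "- \<epsilon> * y > -1"
  proof (cases "\<epsilon> = 1")
    case True
    then have "x \<ge> 1" using fl(1) by simp
    then have "y < 1" using S by (auto simp: S_set_def)
    then show ?thesis using True by simp
  next
    case False
    then have e: "\<epsilon> = -1" using eps by auto
    then have "x \<le> -1" using fl(1) by simp
    then have "y > -1" using S by (auto simp: S_set_def)
    then show ?thesis using e by simp
  qed
  have ff: "(- \<epsilon> * y) * (real_of_int s * (- \<epsilon> * y) + real_of_int p) = real_of_int t * (- \<epsilon> * y) + real_of_int q"
    by (rule fix_f[OF ds(1,2) rr W Ly' U1])
  define ei :: int where "ei = (if \<epsilon> = 1 then 1 else -1)"
  have ei: "real_of_int ei = \<epsilon>" using eps unfolding ei_def by auto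
  have ei2: "ei * ei = 1" unfolding ei_def by simp
  have Fx: "of_int p * x + \<epsilon> * of_int q = x * (\<epsilon> * of_int s * x + of_int t)"
  proof (cases "\<epsilon> = 1")
    case True then show ?thesis using fl(2) by simp
  next
    case False
    then have "\<epsilon> = -1" using eps by auto
    then show ?thesis using fl(2) by (simp add: algebra_simps)
  qed
  have Fy: "of_int p * y + \<epsilon> * of_int q = y * (\<epsilon> * of_int s * y + of_int t)"
  proof (cases "\<epsilon> = 1")
    case True then show ?thesis using ff by (simp add: algebra_simps)
  next
    case False
    then have "\<epsilon> = -1" using eps by auto
    then show ?thesis using ff by (simp add: algebra_simps)
  qed
  define V where "V = (p, ei * q, ei * s, t)"
  have dV: "dt V = 1" unfolding V_def using dP ei2
    by (simp add: algebra_simps)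
  have cV: "ei * s \<noteq> 0" using s1 ei2 by auto
  define l1 where "l1 = \<epsilon> * of_int s * x + of_int t"
  define m1 where "m1 = \<epsilon> * of_int s * y + of_int t"
  have ax: "\<alpha> = x * \<gamma>'" using xg by simp
  have by': "\<beta> = y * \<delta>" using yd by simp
  have eqV: "mm (of_int_mat V) (\<alpha>,\<beta>,\<gamma>',\<delta>) = mm (\<alpha>,\<beta>,\<gamma>',\<delta>) (l1,0,0,m1)"
  proof -
    have c1: "of_int p * \<alpha> + \<epsilon> * of_int q * \<gamma>' = \<alpha> * l1"
    proof -
      have "of_int p * (x*\<gamma>') + \<epsilon> * of_int q * \<gamma>' = \<gamma>' * (of_int p * x + \<epsilon> * of_int q)" by (simp add: algebra_simps)
      also have "\<dots> = \<gamma>' * (x * (\<epsilon> * of_int s * x + of_int t))" using Fx by simp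
      also have "\<dots> = (x*\<gamma>') * l1" unfolding l1_def by (simp add: algebra_simps)
      finally show ?thesis unfolding ax .
    qed
    have c2: "of_int p * \<beta> + \<epsilon> * of_int q * \<delta> = \<beta> * m1"
    proof -
      have "of_int p * (y*\<delta>) + \<epsilon> * of_int q * \<delta> = \<delta> * (of_int p * y + \<epsilon> * of_int q)" by (simp add: algebra_simps)
      also have "\<dots> = \<delta> * (y * (\<epsilon> * of_int s * y + of_int t))" using Fy by simp
      also have "\<dots> = (y*\<delta>) * m1" unfolding m1_def by (simp add: algebra_simps)
      finally show ?thesis unfolding by' .
    qed
    have c3: "\<epsilon> * of_int s * \<alpha> + of_int t * \<gamma>' = \<gamma>' * l1"
      unfolding ax l1_def by (simp add: algebra_simps)
    have c4: "\<epsilon> * of_int s * \<beta> + of_int t * \<delta> = \<delta> * m1"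
      unfolding by' m1_def by (simp add: algebra_simps)
    show ?thesis unfolding V_def using c1 c2 c3 c4 ei by (simp add: algebra_simps)
  qed
  have lm: "l1 * m1 = 1"
  proof -
    have "dt (mm (of_int_mat V) (\<alpha>,\<beta>,\<gamma>',\<delta>)) = 1" using dV dN by (simp add: dt_mm dt_of_int_mat)
    moreover have "dt (mm (\<alpha>,\<beta>,\<gamma>',\<delta>) (l1,0,0,m1)) = l1 * m1" using dN by (simp only: dt_mm) simp
    ultimately show ?thesis using eqV by simp
  qed
  have dN': "dt (\<alpha>,\<beta>,\<gamma>',\<delta>) = (1::real)" using dN by simp
  obtain T V' where T: "T > 0" and dV': "dt V' = 1"
    and cl: "\<And>t. moeb (\<alpha>,\<beta>,\<gamma>',\<delta>) (\<i> * of_real (exp (t + T))) = moeb (of_int_mat V') (moeb (\<alpha>,\<beta>,\<gamma>',\<delta>) (\<i> * of_real (exp t)))"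
    using close_main[OF dN' dV V_def cV eqV lm] by blast
  let ?V = "of_int_mat V'"
  have dV'r: "dt ?V = 1" using dV' by (simp add: dt_of_int_mat)
  have per: "\<gamma> (t + T) = moeb (of_int_mat (mm (iv g) (mm V' g))) (\<gamma> t)" for t
  proof -
    have e1: "moeb ?G (\<gamma> (t + T)) = moeb ?V (moeb ?G (\<gamma> t))" using cl[of t] mo by simp
    have "\<gamma> (t + T) = moeb (iv ?G) (moeb ?G (\<gamma> (t + T)))" using moeb_inv[OF Imt dG] by simp
    also have "\<dots> = moeb (iv ?G) (moeb ?V (moeb ?G (\<gamma> t)))" using e1 by simp
    also have "moeb ?V (moeb ?G (\<gamma> t)) = moeb (mm ?V ?G) (\<gamma> t)"
      by (rule moeb_comp) (use Imt dG dV'r in auto)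
    also have "moeb (iv ?G) (moeb (mm ?V ?G) (\<gamma> t)) = moeb (mm (iv ?G) (mm ?V ?G)) (\<gamma> t)"
      by (rule moeb_comp) (use Imt dG dV'r in \<open>auto simp: dt_mm\<close>)
    finally show ?thesis by (simp add: of_int_mat_mm of_int_mat_iv)
  qed
  have "mm (iv g) (mm V' g) \<in> SL2Z" using dg dV' by (simp add: SL2Z_dt dt_mm)
  then show ?thesis unfolding closed_on_M_def using T per by blast
qed

theorem proposition6p7:
  fixes \<gamma> :: "real \<Rightarrow> complex"
  assumes "is_geodesic \<gamma>"
  shows "closed_on_M \<gamma> \<longleftrightarrow>
    (\<exists>g\<in>SL2Z. \<exists>x y.
       ((\<lambda>t. moeb (of_int_mat g) (\<gamma> t)) \<longlongrightarrow> complex_of_real x) at_top \<and>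
       ((\<lambda>t. moeb (of_int_mat g) (\<gamma> t)) \<longlongrightarrow> complex_of_real y) at_bot \<and>
       (x, y) \<in> S_set \<and>
       (\<exists>(\<epsilon>::real) (r::nat) (ds::(int \<times> int) list).
          \<epsilon> \<in> {-1, 1} \<and> r \<ge> 1 \<and> length ds = r \<and>
          set ds \<subseteq> {(2, -1), (1, 1)} \<and>
          (\<Prod>i<r. - snd (ds ! i)) = 1 \<and>
          (\<lambda>n. \<epsilon> * lconv (\<lambda>i. ds ! (i mod r)) n) \<longlonglongrightarrow> x \<and>
          (\<lambda>n. - \<epsilon> * fconv (\<lambda>j. (snd (ds ! (r - 1 - j mod r)), fst (ds ! (r - 1 - j mod r)))) n)
             \<longlonglongrightarrow> y))"
proof (rule iffI)
  assume c: "closed_on_M \<gamma>"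
  show "(\<exists>g\<in>SL2Z. \<exists>x y.
       ((\<lambda>t. moeb (of_int_mat g) (\<gamma> t)) \<longlongrightarrow> complex_of_real x) at_top \<and>
       ((\<lambda>t. moeb (of_int_mat g) (\<gamma> t)) \<longlongrightarrow> complex_of_real y) at_bot \<and>
       (x, y) \<in> S_set \<and>
       (\<exists>(\<epsilon>::real) (r::nat) (ds::(int \<times> int) list).
          \<epsilon> \<in> {-1, 1} \<and> r \<ge> 1 \<and> length ds = r \<and>
          set ds \<subseteq> {(2, -1), (1, 1)} \<and>
          (\<Prod>i<r. - snd (ds ! i)) = 1 \<and>
          (\<lambda>n. \<epsilon> * lconv (\<lambda>i. ds ! (i mod r)) n) \<longlonglongrightarrow> x \<and>
          (\<lambda>n. - \<epsilon> * fconv (\<lambda>j. (snd (ds ! (r - 1 - j mod r)), fst (ds ! (r - 1 - j mod r)))) n)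
             \<longlonglongrightarrow> y))"
    by (rule forward[OF assms c])
next
  assume h: "(\<exists>g\<in>SL2Z. \<exists>x y.
       ((\<lambda>t. moeb (of_int_mat g) (\<gamma> t)) \<longlongrightarrow> complex_of_real x) at_top \<and>
       ((\<lambda>t. moeb (of_int_mat g) (\<gamma> t)) \<longlongrightarrow> complex_of_real y) at_bot \<and>
       (x, y) \<in> S_set \<and>
       (\<exists>(\<epsilon>::real) (r::nat) (ds::(int \<times> int) list).
          \<epsilon> \<in> {-1, 1} \<and> r \<ge> 1 \<and> length ds = r \<and>
          set ds \<subseteq> {(2, -1), (1, 1)} \<and>
          (\<Prod>i<r. - snd (ds ! i)) = 1 \<and>
          (\<lambda>n. \<epsilon> * lconv (\<lambda>i. ds ! (i mod r)) n) \<longlonglongrightarrow> x \<and>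
          (\<lambda>n. - \<epsilon> * fconv (\<lambda>j. (snd (ds ! (r - 1 - j mod r)), fst (ds ! (r - 1 - j mod r)))) n)
             \<longlonglongrightarrow> y))"
  show "closed_on_M \<gamma>" by (rule backward[OF assms h])
qed

end
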